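(* Let $\overrightarrow{W}$ be a Morse sequence on a simplicial complex $K$. Then for every $p$: (1) $H_p(\overline O)$ and $H_p(\widehat W)$ are isomorphic vector spaces; (2) $H^p(\underline O)$ and $H^p(\widehat W)$ are isomorphic vector spaces.
   Context: A simplicial complex $K$ is a finite collection of non-empty finite sets closed under taking non-empty subsets; $\dim\sigma=|\sigma|-1$, $K^{(p)}$ the set of $p$-simplices. A pair $(\sigma,\tau)$ with $\sigma\subsetneq\tau$ is a free pair for $K$ if $\tau$ is the only simplex other than $\sigma$ containing $\sigma$; $K$ is then an elementary expansion of $K\setminus\{\sigma,\tau\}$. If $\nu$ is a facet (maximal simplex) of $K$, $K$ is an elementary filling of $K\setminus\{\nu\}$. A Morse sequence on $K$ is a sequence $\langle\emptyset=K_0,\dots,K_k=K\rangle$ with each $K_i$ an elementary expansion or filling of $K_{i-1}$; simplices added by fillings are critical; for an expansion $K_i=K_{i-1}\cup\{\sigma,\tau\}$, $\sigma\subset\tau$, $\sigma$ is lower regular and $\tau$ upper regular. $\widehat W$ is the set of critical simplices. $K[p]$ is the $\mathbb{Z}_2$-vector space of subsets of $K^{(p)}$ (sum = symmetric difference, $0=\emptyset$), $\widehat W[p]=\{c\in K[p]:c\subseteq\widehat W\}$. For $\sigma\in K^{(p)}$, $\partial(\sigma)=\{\tau\in K^{(p-1)}:\tau\subset\sigma\}$, $\delta(\sigma)=\{\tau\in K^{(p+1)}:\sigma\subset\tau\}$, with linear extensions $\partial_p,\delta_p$. The reference map $\curlywedge$ is the unique map assigning to each $p$-simplex an element of $\widehat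 W[p]$, extended linearly, with $\curlywedge(\nu)=\{\nu\}$ for critical $\nu$ and $\curlywedge(\tau)=0=\curlywedge(\partial(\tau))$ for upper regular $\tau$; the coreference map $\curlyvee$ is the unique such map with $\curlyvee(\nu)=\{\nu\}$ for critical $\nu$ and $\curlyvee(\sigma)=0=\curlyvee(\delta(\sigma))$ for lower regular $\sigma$. Critical complex: $(\widehat W[p],\widehat\partial_p)$ with $\widehat\partial_p(c)=\curlywedge(\partial_p(c))$; cocritical complex $(\widehat W[p],\widehat\delta_p)$ with $\widehat\delta_p(c)=\curlyvee(\delta_p(c))$; $H_p(\widehat W)$ and $H^p(\widehat W)$ are their (co)homology spaces. Extension maps: $\widetilde\curlywedge_p,\widetilde\curlyvee_p:\widehat W[p]\to K[p]$ linear with $\widetilde\curlywedge(\kappa)=\{\nu\in K:\kappa\in\curlyvee(\nu)\}$, $\widetilde\curlyvee(\kappa)=\{\nu\in K:\kappa\in\curlywedge(\nu)\}$ for critical $p$-simplices $\kappa$. $\overline O[p]=\operatorname{im}\widetilde\curlywedge_p$ and $\underline O[p]=\operatorname{im}\widetilde\curlyvee_p$. The extension complex is the chain complex $(\overline O[p],\partial_p)$ and the coextension complex the cochain complex $(\underline O[p],\delta_p)$ (here $\partial_p$ maps $\overline O[p]$ into $\overline O[p-1]$ and $\delta_p$ maps $\underline O[p]$ into $\underline O[p+1]$); $H_p(\overline O)$ and $H^p(\underline O)$ denote their homology and cohomology spaces. *)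

theory Defs
  imports Main "HOL-Algebra.Coset"
begin

definition simplicial_complex :: "'v set set \<Rightarrow> bool" where
  "simplicial_complex K \<longleftrightarrow> finite K \<and> (\<forall>\<sigma>\<in>K. \<sigma> \<noteq> {} \<and> finite \<sigma>) \<and>
     (\<forall>\<sigma>\<in>K. \<forall>\<tau>. \<tau> \<noteq> {} \<and> \<tau> \<subseteq> \<sigma> \<longrightarrow> \<tau> \<in> K)"

definition simplices :: "'v set set \<Rightarrow> nat \<Rightarrow> 'v set set" where
  "simplices K p = {\<sigma>\<in>K. card \<sigma> = Suc p}"

definition free_pair :: "'v set set \<Rightarrow> 'v set \<Rightarrow> 'v set \<Rightarrow> bool" where
  "free_pair K \<sigma> \<tau> \<longleftrightarrow> \<sigma> \<in> K \<and> \<tau> \<in> K \<and> \<sigma> \<subset> \<tau> \<and> (\<forall>\<rho>\<in>K. \<sigma> \<subseteq> \<rho> \<longrightarrow> \<rho> = \<sigma> \<or> \<rho> = \<tau>)"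

definition facet :: "'v set set \<Rightarrow> 'v set \<Rightarrow> bool" where
  "facet K \<nu> \<longleftrightarrow> \<nu> \<in> K \<and> (\<forall>\<rho>\<in>K. \<nu> \<subseteq> \<rho> \<longrightarrow> \<rho> = \<nu>)"

definition elem_expansion :: "'v set set \<Rightarrow> 'v set set \<Rightarrow> 'v set \<Rightarrow> 'v set \<Rightarrow> bool" where
  "elem_expansion L K' \<sigma> \<tau> \<longleftrightarrow> simplicial_complex K' \<and> free_pair K' \<sigma> \<tau> \<and> L = K' - {\<sigma>, \<tau>}"

definition elem_filling :: "'v set set \<Rightarrow> 'v set set \<Rightarrow> 'v set \<Rightarrow> bool" where
  "elem_filling L K' \<nu> \<longleftrightarrow> simplicial_complex K' \<and> facet K' \<nu> \<and> L = K' - {\<nu>}"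

definition morse_seq :: "'v set set \<Rightarrow> 'v set set list \<Rightarrow> bool" where
  "morse_seq K Ks \<longleftrightarrow> Ks \<noteq> [] \<and> hd Ks = {} \<and> last Ks = K \<and>
     (\<forall>i. Suc i < length Ks \<longrightarrow>
        (\<exists>\<sigma> \<tau>. elem_expansion (Ks!i) (Ks!Suc i) \<sigma> \<tau>) \<or> (\<exists>\<nu>. elem_filling (Ks!i) (Ks!Suc i) \<nu>))"

definition critical :: "'v set set list \<Rightarrow> 'v set set" where
  "critical Ks = {\<nu>. \<exists>i. Suc i < length Ks \<and> elem_filling (Ks!i) (Ks!Suc i) \<nu>}"

definition lower_regular :: "'v set set list \<Rightarrow> 'v set set" where
  "lower_regular Ks = {\<sigma>. \<exists>i \<tau>. Suc i < length Ks \<and> elem_expansion (Ks!i) (Ks!Suc i) \<sigma> \<tau>}"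

definition upper_regular :: "'v set set list \<Rightarrow> 'v set set" where
  "upper_regular Ks = {\<tau>. \<exists>i \<sigma>. Suc i < length Ks \<and> elem_expansion (Ks!i) (Ks!Suc i) \<sigma> \<tau>}"

text \<open>Chains are sets of simplices; the sum is symmetric difference, zero is the empty set.\<close>
definition cadd :: "'a set \<Rightarrow> 'a set \<Rightarrow> 'a set" where
  "cadd A B = (A - B) \<union> (B - A)"

text \<open>Linear (Z_2) extension of a map from simplices to chains.\<close>
definition lin :: "('a \<Rightarrow> 'b set) \<Rightarrow> 'a set \<Rightarrow> 'b set" where
  "lin f c = {\<nu>. odd (card {\<sigma>\<in>c. \<nu> \<in> f \<sigma>})}"

definition chains :: "'v set set \<Rightarrow> nat \<Rightarrow> 'v set set set" where
  "chains K p = Pow (simplices K p)"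

definition bd :: "'v set set \<Rightarrow> 'v set \<Rightarrow> 'v set set" where
  "bd K \<sigma> = {\<tau>\<in>K. \<tau> \<subset> \<sigma> \<and> Suc (card \<tau>) = card \<sigma>}"

definition cbd :: "'v set set \<Rightarrow> 'v set \<Rightarrow> 'v set set" where
  "cbd K \<sigma> = {\<tau>\<in>K. \<sigma> \<subset> \<tau> \<and> Suc (card \<sigma>) = card \<tau>}"

text \<open>W-hat[p]: chains of critical p-simplices.\<close>
definition crit_chains :: "'v set set \<Rightarrow> 'v set set list \<Rightarrow> nat \<Rightarrow> 'v set set set" where
  "crit_chains K Ks p = Pow (simplices K p \<inter> critical Ks)"

definition is_reference :: "'v set set \<Rightarrow> 'v set set list \<Rightarrow> ('v set \<Rightarrow> 'v set set) \<Rightarrow> bool" where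
  "is_reference K Ks f \<longleftrightarrow>
     (\<forall>\<sigma>. \<sigma> \<notin> K \<longrightarrow> f \<sigma> = {}) \<and>
     (\<forall>p. \<forall>\<sigma>\<in>simplices K p. f \<sigma> \<in> crit_chains K Ks p) \<and>
     (\<forall>\<nu>\<in>critical Ks. f \<nu> = {\<nu>}) \<and>
     (\<forall>\<tau>\<in>upper_regular Ks. f \<tau> = {} \<and> lin f (bd K \<tau>) = {})"

definition is_coreference :: "'v set set \<Rightarrow> 'v set set list \<Rightarrow> ('v set \<Rightarrow> 'v set set) \<Rightarrow> bool" where
  "is_coreference K Ks f \<longleftrightarrow>
     (\<forall>\<sigma>. \<sigma> \<notin> K \<longrightarrow> f \<sigma> = {}) \<and>
     (\<forall>p. \<forall>\<sigma>\<in>simplices K p. f \<sigma> \<in> crit_chains K Ks p) \<and>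
     (\<forall>\<nu>\<in>critical Ks. f \<nu> = {\<nu>}) \<and>
     (\<forall>\<sigma>\<in>lower_regular Ks. f \<sigma> = {} \<and> lin f (cbd K \<sigma>) = {})"

definition reference :: "'v set set \<Rightarrow> 'v set set list \<Rightarrow> 'v set \<Rightarrow> 'v set set" where
  "reference K Ks = (THE f. is_reference K Ks f)"

definition coreference :: "'v set set \<Rightarrow> 'v set set list \<Rightarrow> 'v set \<Rightarrow> 'v set set" where
  "coreference K Ks = (THE f. is_coreference K Ks f)"

definition crit_bd :: "'v set set \<Rightarrow> 'v set set list \<Rightarrow> 'v set set \<Rightarrow> 'v set set" where
  "crit_bd K Ks c = lin (reference K Ks) (lin (bd K) c)"

definition crit_cbd :: "'v set set \<Rightarrow> 'v set set list \<Rightarrow> 'v set set \<Rightarrow> 'v set set" where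
  "crit_cbd K Ks c = lin (coreference K Ks) (lin (cbd K) c)"

definition ext_ref :: "'v set set \<Rightarrow> 'v set set list \<Rightarrow> 'v set \<Rightarrow> 'v set set" where
  "ext_ref K Ks \<kappa> = {\<nu>\<in>K. \<kappa> \<in> coreference K Ks \<nu>}"

definition ext_coref :: "'v set set \<Rightarrow> 'v set set list \<Rightarrow> 'v set \<Rightarrow> 'v set set" where
  "ext_coref K Ks \<kappa> = {\<nu>\<in>K. \<kappa> \<in> reference K Ks \<nu>}"

text \<open>O-bar[p] = image of the extension map on W-hat[p]; O-underline[p] likewise.\<close>
definition ext_chains :: "'v set set \<Rightarrow> 'v set set list \<Rightarrow> nat \<Rightarrow> 'v set set set" where
  "ext_chains K Ks p = lin (ext_ref K Ks) ` crit_chains K Ks p"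

definition coext_chains :: "'v set set \<Rightarrow> 'v set set list \<Rightarrow> nat \<Rightarrow> 'v set set set" where
  "coext_chains K Ks p = lin (ext_coref K Ks) ` crit_chains K Ks p"

text \<open>The additive group of a Z_2-vector space of chains. A Z_2-linear isomorphism
  is the same thing as an isomorphism of the underlying additive groups.\<close>
definition chain_grp :: "'a set set \<Rightarrow> 'a set monoid" where
  "chain_grp C = \<lparr>carrier = C, mult = cadd, one = {}\<rparr>"

definition homology :: "(nat \<Rightarrow> 'a set set) \<Rightarrow> ('a set \<Rightarrow> 'a set) \<Rightarrow> nat \<Rightarrow> 'a set set monoid" where
  "homology C d p = chain_grp {c\<in>C p. d c = {}} Mod (d ` C (Suc p))"

definition cohomology :: "(nat \<Rightarrow> 'a set set) \<Rightarrow> ('a set \<Rightarrow> 'a set) \<Rightarrow> nat \<Rightarrow> 'a set set monoid" where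
  "cohomology C d p = chain_grp {c\<in>C p. d c = {}} Mod (if p = 0 then {{}} else d ` C (p - 1))"

end

theory Submission
  imports Defs
begin

definition subsp :: "'a set set \<Rightarrow> bool" where
  "subsp A \<longleftrightarrow> {} \<in> A \<and> (\<forall>x\<in>A. \<forall>y\<in>A. cadd x y \<in> A)"

lemma cadd_assoc: "cadd (cadd a b) c = cadd a (cadd b c)" by (auto simp: cadd_def)
lemma cadd_comm: "cadd a b = cadd b a" by (auto simp: cadd_def)
lemma cadd_self[simp]: "cadd a a = {}" by (auto simp: cadd_def)
lemma cadd_empty[simp]: "cadd a {} = a" "cadd {} a = a" by (auto simp: cadd_def)
lemma cadd_eq_empty: "cadd a b = {} \<longleftrightarrow> a = b" by (auto simp: cadd_def)
lemma mem_cadd: "x \<in> cadd a b \<longleftrightarrow> (x \<in> a) \<noteq> (x \<in> b)" by (auto simp: cadd_def)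

lemma chain_grp_comm_group:
  assumes "subsp A" shows "comm_group (chain_grp A)"
proof (rule comm_groupI)
  fix x assume "x \<in> carrier (chain_grp A)"
  thus "\<exists>y\<in>carrier (chain_grp A). y \<otimes>\<^bsub>chain_grp A\<^esub> x = \<one>\<^bsub>chain_grp A\<^esub>"
    by (intro bexI[of _ x]) (auto simp: chain_grp_def)
qed (use assms in \<open>auto simp: chain_grp_def subsp_def cadd_def\<close>)

lemma inv_chain:
  assumes "subsp A" "x \<in> A" shows "inv\<^bsub>chain_grp A\<^esub> x = x"
proof -
  interpret comm_group "chain_grp A" using chain_grp_comm_group[OF assms(1)] .
  show ?thesis using assms by (intro inv_equality) (auto simp: chain_grp_def)
qed

lemma subsp_subgroup:
  assumes "subsp A" "subsp N" "N \<subseteq> A" shows "subgroup N (chain_grp A)"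
proof -
  interpret comm_group "chain_grp A" using chain_grp_comm_group[OF assms(1)] .
  show ?thesis
  proof (rule subgroupI)
    fix a assume "a \<in> N" thus "inv\<^bsub>chain_grp A\<^esub> a \<in> N" using inv_chain[OF assms(1)] assms(3) by auto
  qed (use assms in \<open>auto simp: chain_grp_def subsp_def\<close>)
qed

lemma quot_iso:
  assumes A: "subsp A" and B: "subsp B" and N: "subsp N" "N \<subseteq> A"
    and bij: "bij_betw \<phi> A B" and add: "\<forall>x\<in>A. \<forall>y\<in>A. \<phi> (cadd x y) = cadd (\<phi> x) (\<phi> y)"
  shows "chain_grp A Mod N \<cong> chain_grp B Mod (\<phi> ` N)"
proof -
  let ?G = "chain_grp A" and ?H = "chain_grp B" and ?N = "\<phi> ` N"
  have GG: "comm_group ?G" using chain_grp_comm_group[OF A] .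
  have HH: "comm_group ?H" using chain_grp_comm_group[OF B] .
  have NB: "?N \<subseteq> B" using bij N(2) by (auto simp: bij_betw_def)
  have phi0: "\<phi> {} = {}"
  proof -
    have "\<phi> (cadd {} {}) = cadd (\<phi> {}) (\<phi> {})" using add A unfolding subsp_def by blast
    thus ?thesis by simp
  qed
  have sN: "subsp ?N" using N add phi0 unfolding subsp_def
    by (auto simp: image_iff) (metis subsetD N(2))
  have sub: "subgroup ?N ?H" using subsp_subgroup[OF B sN NB] .
  have nrm: "?N \<lhd> ?H" using comm_group.subgroup_imp_normal[OF HH sub] .
  have phom: "\<phi> \<in> hom ?G ?H" using bij add by (auto simp: hom_def chain_grp_def bij_betw_def)
  let ?h = "(\<lambda>a. ?N #>\<^bsub>?H\<^esub> a) \<circ> \<phi>"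
  have hhom: "?h \<in> hom ?G (?H Mod ?N)"
    using hom_compose[OF phom normal.r_coset_hom_Mod[OF nrm]] .
  have grpQ: "group (?H Mod ?N)" using normal.factorgroup_is_group[OF nrm] .
  have gh: "group_hom ?G (?H Mod ?N) ?h"
    using hhom grpQ GG by (simp add: group_hom_def group_hom_axioms_def comm_group_def)
  have surj: "?h ` carrier ?G = carrier (?H Mod ?N)"
    using bij unfolding carrier_FactGroup by (auto simp: chain_grp_def bij_betw_def)
  have coset: "?N #>\<^bsub>?H\<^esub> b = ?N \<longleftrightarrow> b \<in> ?N" if "b \<in> B" for b
  proof
    assume "?N #>\<^bsub>?H\<^esub> b = ?N"
    moreover have "b \<in> ?N #>\<^bsub>?H\<^esub> b" using sN unfolding r_coset_def subsp_def
      by (intro UN_I[of "{}"]) (auto simp: chain_grp_def)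
    ultimately show "b \<in> ?N" by simp
  next
    assume "b \<in> ?N"
    thus "?N #>\<^bsub>?H\<^esub> b = ?N"
      using subgroup.rcos_const[OF sub] HH by (simp add: comm_group_def)
  qed
  have ker: "kernel ?G (?H Mod ?N) ?h = N"
  proof -
    have "kernel ?G (?H Mod ?N) ?h = {a\<in>A. \<phi> a \<in> ?N}"
      using coset bij by (auto simp: kernel_def chain_grp_def bij_betw_def)
    also have "\<dots> = N" using bij N(2) by (auto simp: bij_betw_def inj_on_def)
    finally show ?thesis .
  qed
  show ?thesis using group_hom.FactGroup_iso[OF gh surj] ker by simp
qed

lemma lin_mem: "x \<in> lin f X \<longleftrightarrow> odd (card {s\<in>X. x \<in> f s})" by (simp add: lin_def)

lemma lin_empty[simp]: "lin f {} = {}" by (simp add: lin_def)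

lemma lin_insert:
  assumes "finite A" "a \<notin> A" shows "lin f (insert a A) = cadd (f a) (lin f A)"
proof (rule Set.set_eqI)
  fix x
  have fin: "finite {s\<in>A. x \<in> f s}" using assms by simp
  show "x \<in> lin f (insert a A) \<longleftrightarrow> x \<in> cadd (f a) (lin f A)"
  proof (cases "x \<in> f a")
    case True
    hence "{s\<in>insert a A. x \<in> f s} = insert a {s\<in>A. x \<in> f s}" by auto
    moreover have "a \<notin> {s\<in>A. x \<in> f s}" using assms by auto
    ultimately show ?thesis using True fin by (simp add: lin_mem mem_cadd)
  next
    case False
    hence "{s\<in>insert a A. x \<in> f s} = {s\<in>A. x \<in> f s}" by auto
    thus ?thesis using False by (simp add: lin_mem mem_cadd)
  qed
qed

lemma lin_single[simp]: "lin f {a} = f a"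
  using lin_insert[of "{}" a f] by simp

lemma lin_cong: "(\<And>x. x \<in> A \<Longrightarrow> f x = g x) \<Longrightarrow> lin f A = lin g A"
  unfolding lin_def by (metis (mono_tags, lifting) mem_Collect_eq Collect_cong)

lemma card_cadd:
  assumes "finite P" "finite Q"
  shows "card (cadd P Q) + 2 * card (P \<inter> Q) = card P + card Q"
proof -
  have "card (cadd P Q) = card ((P - Q) \<union> (Q - P))" by (simp add: cadd_def)
  also have "\<dots> = card (P - Q) + card (Q - P)"
    using assms by (intro card_Un_disjoint) auto
  finally have "card (cadd P Q) = card (P - Q) + card (Q - P)" .
  moreover have "card (P - Q) = card P - card (P \<inter> Q)"
    using assms by (simp add: card_Diff_subset_Int)
  moreover have "card (Q - P) = card Q - card (P \<inter> Q)"
    using assms by (simp add: card_Diff_subset_Int Int_commute)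
  moreover have "card (P \<inter> Q) \<le> card P" "card (P \<inter> Q) \<le> card Q"
    using assms by (simp_all add: card_mono)
  ultimately show ?thesis by linarith
qed

lemma even_card_cadd:
  assumes "finite P" "finite Q"
  shows "even (card (cadd P Q)) \<longleftrightarrow> (even (card P) \<longleftrightarrow> even (card Q))"
proof -
  have "card (cadd P Q) + 2 * card (P \<inter> Q) = card P + card Q" using card_cadd[OF assms] .
  thus ?thesis by presburger
qed

lemma lin_add:
  assumes "finite A" "finite B"
  shows "lin f (cadd A B) = cadd (lin f A) (lin f B)"
proof (rule Set.set_eqI)
  fix x
  have "{s\<in>cadd A B. x \<in> f s} = cadd {s\<in>A. x \<in> f s} {s\<in>B. x \<in> f s}" by (auto simp: cadd_def)
  thus "x \<in> lin f (cadd A B) \<longleftrightarrow> x \<in> cadd (lin f A) (lin f B)"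
    using even_card_cadd[of "{s\<in>A. x \<in> f s}" "{s\<in>B. x \<in> f s}"] assms
    by (simp add: lin_mem mem_cadd)
qed

lemma lin_subset: "lin f X \<subseteq> \<Union> (f ` X)"
proof
  fix x assume "x \<in> lin f X"
  hence o: "odd (card {s\<in>X. x \<in> f s})" by (simp add: lin_mem)
  have "{s\<in>X. x \<in> f s} \<noteq> {}"
  proof
    assume "{s\<in>X. x \<in> f s} = {}"
    with o show False by simp
  qed
  thus "x \<in> \<Union> (f ` X)" by auto
qed

lemma finite_lin: "finite X \<Longrightarrow> (\<And>x. x \<in> X \<Longrightarrow> finite (f x)) \<Longrightarrow> finite (lin f X)"
  by (meson finite_UN_I finite_subset lin_subset)

lemma lin_comp:
  assumes "finite X" "\<And>x. x \<in> X \<Longrightarrow> finite (g x)"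
  shows "lin h (lin g X) = lin (\<lambda>x. lin h (g x)) X"
  using assms
proof (induction X rule: finite_induct)
  case empty then show ?case by simp
next
  case (insert x X)
  have 1: "lin g (insert x X) = cadd (g x) (lin g X)" by (rule lin_insert[OF insert(1,2)])
  have 2: "finite (lin g X)" using insert.prems insert.hyps(1) by (intro finite_lin) auto
  have 3: "finite (g x)" using insert.prems by simp
  have "lin h (lin g (insert x X)) = cadd (lin h (g x)) (lin h (lin g X))"
    unfolding 1 by (rule lin_add[OF 3 2])
  also have "\<dots> = cadd (lin h (g x)) (lin (\<lambda>x. lin h (g x)) X)" using insert.IH insert.prems by simp
  also have "\<dots> = lin (\<lambda>x. lin h (g x)) (insert x X)" by (rule lin_insert[OF insert(1,2), symmetric])
  finally show ?case .
qed

lemma lin_eq_empty_pick: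
  assumes "finite A" "t \<in> A" "lin f A = {}" shows "f t = lin f (A - {t})"
proof -
  have "A = insert t (A - {t})" using assms by auto
  hence "lin f A = cadd (f t) (lin f (A - {t}))" using assms lin_insert[of "A - {t}" t f] by simp
  hence "cadd (f t) (lin f (A - {t})) = {}" using assms by simp
  thus ?thesis by (simp only: cadd_eq_empty)
qed

lemma lin_lin_pick:
  assumes "finite A" "t \<in> A" shows "lin f A = cadd (f t) (lin f (A - {t}))"
proof -
  have "A = insert t (A - {t})" using assms by auto
  thus ?thesis using assms lin_insert[of "A - {t}" t f] by simp
qed

definition aref :: "'a set \<Rightarrow> ('a \<Rightarrow> 'a set) \<Rightarrow> 'a set \<Rightarrow> 'a set \<Rightarrow> ('a \<Rightarrow> nat) \<Rightarrow> ('a \<Rightarrow> 'a set) \<Rightarrow> bool" where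
  "aref K d C H dm f \<longleftrightarrow> (\<forall>x. x \<notin> K \<longrightarrow> f x = {}) \<and> (\<forall>x\<in>K. f x \<subseteq> {c\<in>C. dm c = dm x}) \<and>
     (\<forall>c\<in>C. f c = {c}) \<and> (\<forall>h\<in>H. f h = {} \<and> lin f (d h) = {})"

locale mstruct =
  fixes K :: "'a set" and d cd :: "'a \<Rightarrow> 'a set" and C H T :: "'a set" and mt :: "'a \<Rightarrow> 'a"
    and rk dm :: "'a \<Rightarrow> nat"
  assumes finK: "finite K"
  and d_sub: "\<And>x. x \<in> K \<Longrightarrow> d x \<subseteq> K"
  and cd_sub: "\<And>x. x \<in> K \<Longrightarrow> cd x \<subseteq> K"
  and dcd: "\<And>x y. x \<in> K \<Longrightarrow> y \<in> K \<Longrightarrow> y \<in> d x \<longleftrightarrow> x \<in> cd y"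
  and dd: "\<And>x. x \<in> K \<Longrightarrow> lin d (d x) = {}"
  and KCHT: "K = C \<union> H \<union> T" and CH: "C \<inter> H = {}" and CT: "C \<inter> T = {}" and HT: "H \<inter> T = {}"
  and mt_d: "\<And>h. h \<in> H \<Longrightarrow> mt h \<in> d h" and mt_T: "\<And>h. h \<in> H \<Longrightarrow> mt h \<in> T"
  and mt_onto: "\<And>t. t \<in> T \<Longrightarrow> \<exists>h\<in>H. mt h = t"
  and mt_inj: "inj_on mt H"
  and mt_rk: "\<And>h. h \<in> H \<Longrightarrow> rk (mt h) = rk h"
  and d_rk: "\<And>h y. h \<in> H \<Longrightarrow> y \<in> d h \<Longrightarrow> y \<noteq> mt h \<Longrightarrow> rk y < rk h"
  and d_dm: "\<And>x y z. x \<in> K \<Longrightarrow> y \<in> d x \<Longrightarrow> z \<in> d x \<Longrightarrow> dm y = dm z"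
begin

lemma fin_d: "x \<in> K \<Longrightarrow> finite (d x)" using d_sub finK finite_subset by blast
lemma fin_cd: "x \<in> K \<Longrightarrow> finite (cd x)" using cd_sub finK finite_subset by blast

lemma d_rk_le: "h \<in> H \<Longrightarrow> y \<in> d h \<Longrightarrow> rk y \<le> rk h"
  using d_rk[of h y] mt_rk[of h] by (cases "y = mt h") (auto simp: less_imp_le)

lemma aref_unique:
  assumes f: "aref K d C H dm f" and g: "aref K d C H dm g"
  shows "f = g"
proof -
  have main: "\<forall>x\<in>K. rk x = n \<longrightarrow> f x = g x" for n
  proof (induction n rule: less_induct)
    case (less n)
    show ?case
    proof (intro ballI impI)
      fix x assume x: "x \<in> K" "rk x = n"
      consider "x \<in> C" | "x \<in> H" | "x \<in> T" using x KCHT by blast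
      thus "f x = g x"
      proof cases
        case 1 thus ?thesis using f g by (simp add: aref_def)
      next
        case 2 thus ?thesis using f g by (simp add: aref_def)
      next
        case 3
        then obtain h where h: "h \<in> H" "mt h = x" using mt_onto by blast
        have hK: "h \<in> K" using h KCHT by blast
        have xd: "x \<in> d h" using h mt_d by blast
        have lf: "lin f (d h) = {}" "lin g (d h) = {}" using f g h(1) by (simp_all add: aref_def)
        have "f x = lin f (d h - {x})"
          using lin_eq_empty_pick[OF fin_d[OF hK] xd lf(1)] .
        also have "\<dots> = lin g (d h - {x})"
        proof (rule lin_cong)
          fix y assume y: "y \<in> d h - {x}"
          hence "rk y < n" using d_rk[of h y] h x mt_rk by auto
          moreover have "y \<in> K" using y d_sub hK by blast
          ultimately show "f y = g y" using less by blast
        qed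
        also have "\<dots> = g x"
          using lin_eq_empty_pick[OF fin_d[OF hK] xd lf(2)] by simp
        finally show ?thesis .
      qed
    qed
  qed
  show ?thesis
  proof
    fix x show "f x = g x"
      using main f g by (cases "x \<in> K") (auto simp: aref_def)
  qed
qed

definition Pn :: "nat \<Rightarrow> ('a \<Rightarrow> 'a set) \<Rightarrow> bool" where
  "Pn n f \<longleftrightarrow> (\<forall>x. x \<notin> K \<or> n \<le> rk x \<longrightarrow> f x = {}) \<and> (\<forall>x\<in>K. rk x < n \<longrightarrow> f x \<subseteq> {c\<in>C. dm c = dm x}) \<and>
     (\<forall>c\<in>C. rk c < n \<longrightarrow> f c = {c}) \<and> (\<forall>h\<in>H. rk h < n \<longrightarrow> f h = {} \<and> lin f (d h) = {})"

lemma Pn_ex: "\<exists>f. Pn n f"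
proof (induction n)
  case 0
  show ?case by (rule exI[of _ "\<lambda>_. {}"]) (simp add: Pn_def)
next
  case (Suc n)
  then obtain f where f: "Pn n f" by blast
  define f' where "f' x = (if x \<in> K \<and> rk x = n then (if x \<in> C then {x} else if x \<in> T then
       lin f (d (inv_into H mt x) - {x}) else {}) else f x)" for x
  have same: "f' x = f x" if "rk x < n" for x using that by (simp add: f'_def)
  have T1: "f' (mt h) = lin f (d h - {mt h})" if "h \<in> H" "rk h = n" for h
  proof -
    have "mt h \<in> T" "mt h \<in> K" using that mt_T KCHT by blast+
    moreover have "mt h \<notin> C" using \<open>mt h \<in> T\<close> CT by blast
    moreover have "inv_into H mt (mt h) = h" using that mt_inj by (simp add: inv_into_f_f)
    ultimately show ?thesis using that mt_rk by (simp add: f'_def)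
  qed
  have "Pn (Suc n) f'"
    unfolding Pn_def
  proof (intro conjI allI ballI impI)
    fix x assume "x \<notin> K \<or> Suc n \<le> rk x"
    thus "f' x = {}" using f by (auto simp: f'_def Pn_def)
  next
    fix x assume x: "x \<in> K" "rk x < Suc n"
    show "f' x \<subseteq> {c\<in>C. dm c = dm x}"
    proof (cases "rk x < n")
      case True thus ?thesis using f x same by (simp add: Pn_def)
    next
      case False
      hence rx: "rk x = n" using x by simp
      consider "x \<in> C" | "x \<in> H" | "x \<in> T" using x KCHT by blast
      thus ?thesis
      proof cases
        case 1 thus ?thesis using x rx by (simp add: f'_def)
      next
        case 2 thus ?thesis using x rx CH HT by (auto simp: f'_def)
      next
        case 3
        then obtain h where h: "h \<in> H" "mt h = x" using mt_onto by blast
        have hK: "h \<in> K" using h KCHT by blast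
        have rh: "rk h = n" using h rx mt_rk by auto
        have "f' x = lin f (d h - {x})" using T1[OF h(1) rh] h by simp
        also have "\<dots> \<subseteq> \<Union> (f ` (d h - {x}))" by (rule lin_subset)
        also have "\<dots> \<subseteq> {c\<in>C. dm c = dm x}"
        proof (intro UN_least)
          fix y assume y: "y \<in> d h - {x}"
          have yK: "y \<in> K" using y d_sub hK by blast
          have "rk y < n" using d_rk[of h y] y h rh by auto
          hence "f y \<subseteq> {c\<in>C. dm c = dm y}" using f yK by (simp add: Pn_def)
          moreover have "dm y = dm x" using d_dm[OF hK, of y x] y h mt_d by blast
          ultimately show "f y \<subseteq> {c\<in>C. dm c = dm x}" by simp
        qed
        finally show ?thesis .
      qed
    qed
  next
    fix c assume c: "c \<in> C" "rk c < Suc n"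
    show "f' c = {c}"
    proof (cases "rk c < n")
      case True thus ?thesis using f c same by (simp add: Pn_def)
    next
      case False thus ?thesis using c KCHT by (simp add: f'_def)
    qed
  next
    fix h assume h: "h \<in> H" "rk h < Suc n"
    have hK: "h \<in> K" using h KCHT by blast
    show "f' h = {}"
    proof (cases "rk h < n")
      case True thus ?thesis using f h same by (simp add: Pn_def)
    next
      case False thus ?thesis using h hK CH HT by (auto simp: f'_def)
    qed
    show "lin f' (d h) = {}"
    proof (cases "rk h < n")
      case True
      have "lin f' (d h) = lin f (d h)"
        by (rule lin_cong) (use d_rk_le[OF h(1)] True same in fastforce)
      thus ?thesis using f h True by (simp add: Pn_def)
    next
      case False
      hence rh: "rk h = n" using h by simp
      have "lin f' (d h) = cadd (f' (mt h)) (lin f' (d h - {mt h}))"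
        by (rule lin_lin_pick[OF fin_d[OF hK] mt_d[OF h(1)]])
      also have "lin f' (d h - {mt h}) = lin f (d h - {mt h})"
        by (rule lin_cong) (use d_rk[OF h(1)] rh same in fastforce)
      finally show ?thesis using T1[OF h(1) rh] by simp
    qed
  qed
  thus ?case by blast
qed

lemma aref_ex1: "\<exists>!f. aref K d C H dm f"
proof -
  obtain n where n: "\<forall>x\<in>K. rk x < n"
    using finK finite_nat_set_iff_bounded[of "rk ` K"] by auto
  obtain f where f: "Pn n f" using Pn_ex by blast
  have "aref K d C H dm f"
    using f n unfolding Pn_def aref_def using KCHT by auto
  thus ?thesis using aref_unique by blast
qed

lemma aref_the: "aref K d C H dm (THE f. aref K d C H dm f)"
  using theI'[OF aref_ex1] .

end

context mstruct
begin

lemma aref_D: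
  assumes "aref K d C H dm f"
  shows "\<And>x. x \<notin> K \<Longrightarrow> f x = {}" "\<And>x. x \<in> K \<Longrightarrow> f x \<subseteq> {c\<in>C. dm c = dm x}"
    "\<And>c. c \<in> C \<Longrightarrow> f c = {c}" "\<And>h. h \<in> H \<Longrightarrow> f h = {}" "\<And>h. h \<in> H \<Longrightarrow> lin f (d h) = {}"
  using assms by (auto simp: aref_def)

lemma CK: "C \<subseteq> K" using KCHT by blast
lemma HK: "H \<subseteq> K" using KCHT by blast
lemma TK: "T \<subseteq> K" using KCHT by blast

lemma fin_f: "aref K d C H dm f \<Longrightarrow> finite (f x)"
  by (metis (no_types, lifting) CK aref_D(1,2) finK finite.emptyI finite_subset mem_Collect_eq subsetI)

lemma f_sub: "aref K d C H dm f \<Longrightarrow> f x \<subseteq> K"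
  using aref_D(1,2) CK by (cases "x \<in> K") fastforce+

lemma chain_elem:
  assumes f: "aref K d C H dm f"
  shows "x \<in> K \<Longrightarrow> lin f (lin d (f x)) = lin f (d x)"
proof -
  have main: "\<forall>x\<in>K. rk x = n \<longrightarrow> lin f (lin d (f x)) = lin f (d x)" for n
  proof (induction n rule: less_induct)
    case (less n)
    show ?case
    proof (intro ballI impI)
      fix x assume x: "x \<in> K" "rk x = n"
      consider "x \<in> C" | "x \<in> H" | "x \<in> T" using x KCHT by blast
      thus "lin f (lin d (f x)) = lin f (d x)"
      proof cases
        case 1 thus ?thesis using aref_D[OF f] by simp
      next
        case 2 thus ?thesis using aref_D[OF f] by simp
      next
        case 3
        then obtain h where h: "h \<in> H" "mt h = x" using mt_onto by blast
        have hK: "h \<in> K" using h KCHT by blast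
        have xd: "x \<in> d h" using h mt_d by blast
        define R where "R = d h - {x}"
        have finR: "finite R" using fin_d[OF hK] by (simp add: R_def)
        have RK: "R \<subseteq> K" using d_sub[OF hK] by (auto simp: R_def)
        have rkR: "\<And>y. y \<in> R \<Longrightarrow> rk y < n" using d_rk[OF h(1)] h x mt_rk by (auto simp: R_def)
        have fx: "f x = lin f R"
          unfolding R_def using lin_eq_empty_pick[OF fin_d[OF hK] xd aref_D(5)[OF f h(1)]] .
        have dx: "d x = lin d R"
        proof -
          have "lin d (d h) = cadd (d x) (lin d R)" unfolding R_def by (rule lin_lin_pick[OF fin_d[OF hK] xd])
          hence "cadd (d x) (lin d R) = {}" using dd[OF hK] by simp
          thus ?thesis by (simp only: cadd_eq_empty)
        qed
        have "lin f (lin d (f x)) = lin f (lin d (lin f R))" by (simp add: fx)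
        also have "\<dots> = lin f (lin (\<lambda>y. lin d (f y)) R)"
          using lin_comp[OF finR, of f d] fin_f[OF f] by simp
        also have "\<dots> = lin (\<lambda>y. lin f (lin d (f y))) R"
        proof (rule lin_comp[OF finR])
          fix y assume "y \<in> R"
          show "finite (lin d (f y))"
            using fin_f[OF f] f_sub[OF f] fin_d by (intro finite_lin) blast+
        qed
        also have "\<dots> = lin (\<lambda>y. lin f (d y)) R"
          by (rule lin_cong) (use less rkR RK in blast)
        also have "\<dots> = lin f (lin d R)"
          using lin_comp[OF finR, of d f] fin_d RK by auto
        also have "\<dots> = lin f (d x)" by (simp add: dx)
        finally show ?thesis .
      qed
    qed
  qed
  assume "x \<in> K" thus ?thesis using main by blast
qed

lemma chain_set:
  assumes f: "aref K d C H dm f" and X: "X \<subseteq> K"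
  shows "lin f (lin d (lin f X)) = lin f (lin d X)"
proof -
  have finX: "finite X" using X finK finite_subset by blast
  have "lin f (lin d (lin f X)) = lin f (lin (\<lambda>y. lin d (f y)) X)"
    using lin_comp[OF finX, of f d] fin_f[OF f] by simp
  also have "\<dots> = lin (\<lambda>y. lin f (lin d (f y))) X"
  proof (rule lin_comp[OF finX])
    fix y assume "y \<in> X"
    show "finite (lin d (f y))"
      using fin_f[OF f] f_sub[OF f] fin_d by (intro finite_lin) blast+
  qed
  also have "\<dots> = lin (\<lambda>y. lin f (d y)) X"
    by (rule lin_cong) (use chain_elem[OF f] X in blast)
  also have "\<dots> = lin f (lin d X)"
    using lin_comp[OF finX, of d f] fin_d X by auto
  finally show ?thesis .
qed

end

context mstruct
begin

lemma proj:
  assumes f: "aref K d C H dm f" and y: "y \<subseteq> K" "y \<inter> T = {}"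
  shows "lin f y = y \<inter> C"
proof -
  have "lin f y = lin (\<lambda>x. if x \<in> C then {x} else {}) y"
  proof (rule lin_cong)
    fix x assume "x \<in> y"
    hence "x \<in> C \<or> x \<in> H" using y KCHT by blast
    thus "f x = (if x \<in> C then {x} else {})" using aref_D[OF f] CH by auto
  qed
  also have "\<dots> = y \<inter> C"
  proof (rule Set.set_eqI)
    fix z
    have "{s\<in>y. z \<in> (if s \<in> C then {s} else {})} = (if z \<in> y \<inter> C then {z} else {})" by auto
    thus "z \<in> lin (\<lambda>x. if x \<in> C then {x} else {}) y \<longleftrightarrow> z \<in> y \<inter> C" by (simp add: lin_mem)
  qed
  finally show ?thesis .
qed

definition S :: "'a set set" where
  "S = {y. y \<inter> H = {} \<and> (\<forall>h\<in>H. even (card (y \<inter> d h)))}"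

definition ext :: "('a \<Rightarrow> 'a set) \<Rightarrow> 'a \<Rightarrow> 'a set" where
  "ext f \<kappa> = {\<nu>\<in>K. \<kappa> \<in> f \<nu>}"

lemma S_add:
  assumes "y \<in> S" "z \<in> S" "finite y" "finite z" shows "cadd y z \<in> S"
  unfolding S_def
proof (intro CollectI conjI ballI)
  show "cadd y z \<inter> H = {}" using assms by (auto simp: S_def cadd_def)
  fix h assume h: "h \<in> H"
  have "cadd y z \<inter> d h = cadd (y \<inter> d h) (z \<inter> d h)" by (auto simp: cadd_def)
  thus "even (card (cadd y z \<inter> d h))" using even_card_cadd[of "y \<inter> d h" "z \<inter> d h"] assms h
    by (simp add: S_def)
qed

lemma S_empty: "{} \<in> S" by (simp add: S_def)

lemma ext_sub: "ext f \<kappa> \<subseteq> K" by (auto simp: ext_def)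

lemma lin_ext_sub: "lin (ext f) w \<subseteq> K"
  using lin_subset[of "ext f" w] ext_sub by blast

lemma ext_S:
  assumes f: "aref K d C H dm f" shows "ext f \<kappa> \<in> S"
  unfolding S_def
proof (intro CollectI conjI ballI)
  show "ext f \<kappa> \<inter> H = {}" using aref_D(4)[OF f] by (auto simp: ext_def)
  fix h assume h: "h \<in> H"
  have hK: "h \<in> K" using h HK by blast
  have "ext f \<kappa> \<inter> d h = {s\<in>d h. \<kappa> \<in> f s}" using d_sub[OF hK] by (auto simp: ext_def)
  moreover have "\<kappa> \<notin> lin f (d h)" using aref_D(5)[OF f h] by simp
  ultimately show "even (card (ext f \<kappa> \<inter> d h))" by (simp add: lin_mem)
qed

lemma lin_ext_S:
  assumes f: "aref K d C H dm f" and w: "finite w" shows "lin (ext f) w \<in> S"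
  using w
proof (induction w rule: finite_induct)
  case empty thus ?case by (simp add: S_empty)
next
  case (insert x w)
  have "lin (ext f) (insert x w) = cadd (ext f x) (lin (ext f) w)" by (rule lin_insert[OF insert(1,2)])
  moreover have "finite (ext f x)" by (rule finite_subset[OF ext_sub finK])
  moreover have "finite (lin (ext f) w)" by (rule finite_subset[OF lin_ext_sub finK])
  ultimately show ?case using S_add ext_S[OF f] insert.IH by simp
qed

lemma lin_ext_C:
  assumes f: "aref K d C H dm f" and w: "w \<subseteq> C" shows "lin (ext f) w \<inter> C = w"
proof (rule Set.set_eqI)
  fix z
  show "z \<in> lin (ext f) w \<inter> C \<longleftrightarrow> z \<in> w"
  proof (cases "z \<in> C")
    case True
    hence "{s\<in>w. z \<in> ext f s} = (if z \<in> w then {z} else {})"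
      using aref_D(3)[OF f] CK by (auto simp: ext_def)
    thus ?thesis using True by (simp add: lin_mem)
  next
    case False thus ?thesis using w by auto
  qed
qed

lemma lin_ext_dm:
  assumes f: "aref K d C H dm f" and w: "w \<subseteq> {c\<in>C. dm c = m}" and x: "x \<in> lin (ext f) w"
  shows "dm x = m"
proof -
  obtain \<kappa> where k: "\<kappa> \<in> w" "x \<in> ext f \<kappa>" using lin_subset[of "ext f" w] x by blast
  hence "x \<in> K" "\<kappa> \<in> f x" by (auto simp: ext_def)
  hence "dm \<kappa> = dm x" using aref_D(2)[OF f] by blast
  thus ?thesis using k w by auto
qed

lemma S_repr:
  assumes f: "aref K d C H dm f" and y: "y \<subseteq> K" "y \<in> S"
  shows "y = lin (ext f) (y \<inter> C)"
proof -
  define z where "z = cadd y (lin (ext f) (y \<inter> C))"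
  have finy: "finite y" by (rule finite_subset[OF y(1) finK])
  have fin2: "finite (lin (ext f) (y \<inter> C))" by (rule finite_subset[OF lin_ext_sub finK])
  have zS: "z \<in> S" unfolding z_def
    using S_add[OF y(2) lin_ext_S[OF f] finy fin2] finy by simp
  have zK: "z \<subseteq> K" using y lin_ext_sub by (auto simp: z_def cadd_def)
  have "z \<inter> C = cadd (y \<inter> C) (lin (ext f) (y \<inter> C) \<inter> C)" by (auto simp: z_def cadd_def)
  hence zC: "z \<inter> C = {}" using lin_ext_C[OF f, of "y \<inter> C"] by simp
  have zH: "z \<inter> H = {}" using zS by (simp add: S_def)
  have zT: "z \<subseteq> T" using zK zC zH KCHT by blast
  have "z = {}"
  proof (rule ccontr)
    assume "z \<noteq> {}"
    then obtain t0 where "t0 \<in> z" by blast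
    then obtain t where t: "t \<in> z" "\<And>t'. t' \<in> z \<Longrightarrow> rk t \<le> rk t'"
      using ex_has_least_nat[of "\<lambda>t. t \<in> z" t0 rk] by blast
    obtain h where h: "h \<in> H" "mt h = t" using mt_onto t zT by blast
    have "z \<inter> d h = {t}"
    proof
      show "{t} \<subseteq> z \<inter> d h" using t h mt_d by blast
      show "z \<inter> d h \<subseteq> {t}"
      proof
        fix y' assume y': "y' \<in> z \<inter> d h"
        show "y' \<in> {t}"
        proof (rule ccontr)
          assume "y' \<notin> {t}"
          hence "rk y' < rk h" using d_rk[OF h(1), of y'] y' h by auto
          moreover have "rk t \<le> rk y'" using t y' by blast
          ultimately show False using mt_rk h by auto
        qed
      qed
    qed
    moreover have "even (card (z \<inter> d h))" using zS h by (simp add: S_def)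
    ultimately show False by simp
  qed
  thus ?thesis unfolding z_def by (simp add: cadd_eq_empty)
qed

lemma adjoint:
  assumes y: "finite y" "y \<subseteq> K" and B: "B \<subseteq> K"
  shows "even (card (lin cd y \<inter> B)) \<longleftrightarrow> even (card (y \<inter> lin d B))"
  using y
proof (induction y rule: finite_induct)
  case empty thus ?case by simp
next
  case (insert v y)
  have vK: "v \<in> K" using insert by blast
  have finB: "finite B" by (rule finite_subset[OF B finK])
  have "lin cd (insert v y) \<inter> B = cadd (cd v \<inter> B) (lin cd y \<inter> B)"
    using lin_insert[OF insert(1,2), of cd] by (auto simp: cadd_def)
  hence L: "even (card (lin cd (insert v y) \<inter> B)) \<longleftrightarrow> (even (card (cd v \<inter> B)) \<longleftrightarrow> even (card (lin cd y \<inter> B)))"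
    using even_card_cadd[of "cd v \<inter> B" "lin cd y \<inter> B"] finB by simp
  have "{s\<in>B. v \<in> d s} = cd v \<inter> B"
  proof (rule Set.set_eqI)
    fix s show "s \<in> {s\<in>B. v \<in> d s} \<longleftrightarrow> s \<in> cd v \<inter> B"
    proof (cases "s \<in> B")
      case True
      hence "s \<in> K" using B by blast
      thus ?thesis using dcd[OF \<open>s \<in> K\<close> vK] True by simp
    qed simp
  qed
  hence vin: "v \<in> lin d B \<longleftrightarrow> odd (card (cd v \<inter> B))" by (simp add: lin_mem)
  have finy': "finite (y \<inter> lin d B)" using insert by simp
  have vy: "v \<notin> y \<inter> lin d B" using insert by simp
  have R: "even (card (insert v y \<inter> lin d B)) \<longleftrightarrow> (even (card (cd v \<inter> B)) \<longleftrightarrow> even (card (y \<inter> lin d B)))"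
  proof (cases "v \<in> lin d B")
    case True
    hence "insert v y \<inter> lin d B = insert v (y \<inter> lin d B)" by auto
    thus ?thesis using True vin finy' vy by simp
  next
    case False
    hence "insert v y \<inter> lin d B = y \<inter> lin d B" by auto
    thus ?thesis using False vin by simp
  qed
  show ?case using L R insert.IH insert.prems by simp
qed

lemma S_cd:
  assumes y: "y \<subseteq> K" "y \<in> S" shows "lin cd y \<in> S"
  unfolding S_def
proof (intro CollectI conjI ballI)
  have finy: "finite y" by (rule finite_subset[OF y(1) finK])
  show "lin cd y \<inter> H = {}"
  proof (rule ccontr)
    assume "lin cd y \<inter> H \<noteq> {}"
    then obtain h where h: "h \<in> H" "h \<in> lin cd y" by blast
    have hK: "h \<in> K" using h HK by blast
    have "{s\<in>y. h \<in> cd s} = y \<inter> d h"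
    proof (rule Set.set_eqI)
      fix s show "s \<in> {s\<in>y. h \<in> cd s} \<longleftrightarrow> s \<in> y \<inter> d h"
      proof (cases "s \<in> y")
        case True
        hence "s \<in> K" using y(1) by blast
        thus ?thesis using dcd[OF hK \<open>s \<in> K\<close>] True by simp
      qed simp
    qed
    hence "odd (card (y \<inter> d h))" using h by (simp add: lin_mem)
    thus False using y h by (simp add: S_def)
  qed
  fix h assume h: "h \<in> H"
  have hK: "h \<in> K" using h HK by blast
  show "even (card (lin cd y \<inter> d h))"
    using adjoint[OF finy y(1) d_sub[OF hK]] dd[OF hK] by simp
qed

end

lemma assembly:
  assumes R: "mstruct K d cd C H T mt1 rk1 dm" and Co: "mstruct K cd d C T H mt2 rk2 dm"
    and f: "aref K d C H dm f" and g: "aref K cd C T dm g"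
    and dims: "\<forall>x\<in>K. dm x = m' \<longrightarrow> (\<forall>y\<in>d x. dm y = m)"
  defines "E \<equiv> (\<lambda>\<kappa>. {\<nu>\<in>K. \<kappa> \<in> g \<nu>})"
  defines "Od \<equiv> (\<lambda>k. lin E ` Pow {c\<in>C. dm c = k})"
  defines "Wd \<equiv> (\<lambda>k. Pow {c\<in>C. dm c = k})"
  shows "chain_grp {c\<in>Od m. lin d c = {}} Mod (lin d ` Od m') \<cong>
         chain_grp {c\<in>Wd m. lin f (lin d c) = {}} Mod ((\<lambda>c. lin f (lin d c)) ` Wd m')"
proof -
  interpret R: mstruct K d cd C H T mt1 rk1 dm by (rule R)
  interpret Co: mstruct K cd d C T H mt2 rk2 dm by (rule Co)
  have Eext: "Co.ext g = E" by (simp add: Co.ext_def E_def fun_eq_iff)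
  define SC where "SC = Co.S"
  have finK: "finite K" by (rule R.finK)
  have fin: "finite y" if "y \<subseteq> K" for y by (rule finite_subset[OF that finK])
  have Ochar: "Od k = {y. y \<subseteq> K \<and> y \<in> SC \<and> (\<forall>x\<in>y. dm x = k)}" for k
  proof (rule Set.set_eqI, rule iffI)
    fix y assume "y \<in> Od k"
    then obtain w where w: "w \<subseteq> {c\<in>C. dm c = k}" "y = lin E w" by (auto simp: Od_def)
    have "finite w" using w R.CK fin by blast
    thus "y \<in> {y. y \<subseteq> K \<and> y \<in> SC \<and> (\<forall>x\<in>y. dm x = k)}"
      using w Co.lin_ext_sub[of g w] Co.lin_ext_S[OF g, of w] Co.lin_ext_dm[OF g w(1)]
      by (auto simp: Eext SC_def)
  next
    fix y assume y: "y \<in> {y. y \<subseteq> K \<and> y \<in> SC \<and> (\<forall>x\<in>y. dm x = k)}"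
    hence "y = lin E (y \<inter> C)" using Co.S_repr[OF g] by (simp add: Eext SC_def)
    moreover have "y \<inter> C \<in> Pow {c\<in>C. dm c = k}" using y by auto
    ultimately show "y \<in> Od k" unfolding Od_def by blast
  qed
  have o1: "lin f y = y \<inter> C" if "y \<in> Od k" for y k
    using that R.proj[OF f] by (auto simp: Ochar SC_def Co.S_def)
  have o2: "lin E (y \<inter> C) = y" if "y \<in> Od k" for y k
    using that Co.S_repr[OF g] by (auto simp: Ochar SC_def Eext)
  have o3: "lin E w \<in> Od k" "lin E w \<inter> C = w" if "w \<in> Wd k" for w k
    using that Co.lin_ext_C[OF g, of w] by (auto simp: Od_def Wd_def Eext)
  have dK: "lin d y \<subseteq> K" if "y \<subseteq> K" for y
    using lin_subset[of d y] R.d_sub that by blast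
  have o4: "lin d y \<in> Od m" if "y \<in> Od m'" for y
  proof -
    have y: "y \<subseteq> K" "y \<in> SC" "\<forall>x\<in>y. dm x = m'" using that by (auto simp: Ochar)
    have "lin d y \<in> SC" using Co.S_cd[OF y(1)] y(2) by (simp add: SC_def)
    moreover have "\<forall>x\<in>lin d y. dm x = m"
    proof
      fix x assume "x \<in> lin d y"
      then obtain z where "z \<in> y" "x \<in> d z" using lin_subset[of d y] by blast
      thus "dm x = m" using dims y by blast
    qed
    ultimately show ?thesis using dK[OF y(1)] by (simp add: Ochar)
  qed
  have o5: "lin d (lin d y) = {}" if "y \<subseteq> K" for y
  proof -
    have "lin d (lin d y) = lin (\<lambda>x. lin d (d x)) y"
      using lin_comp[OF fin[OF that], of d d] R.fin_d that by auto
    also have "\<dots> = lin (\<lambda>x. {}) y" by (rule lin_cong) (use R.dd that in blast)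
    also have "\<dots> = {}" by (simp add: lin_def)
    finally show ?thesis .
  qed
  have OK: "y \<subseteq> K" if "y \<in> Od k" for y k using that by (simp add: Ochar)
  have o6: "subsp (Od k)" for k
    unfolding subsp_def
  proof (intro conjI ballI)
    show "{} \<in> Od k" unfolding Od_def by (rule image_eqI[of _ _ "{}"]) auto
    fix y z assume y: "y \<in> Od k" and z: "z \<in> Od k"
    have "cadd y z \<in> SC"
      using Co.S_add[of y z] y z fin[OF OK[OF y]] fin[OF OK[OF z]] by (auto simp: Ochar SC_def)
    thus "cadd y z \<in> Od k" using y z by (auto simp: Ochar cadd_def)
  qed
  have ladd: "lin d (cadd y z) = cadd (lin d y) (lin d z)" if "y \<subseteq> K" "z \<subseteq> K" for y z
    by (rule lin_add[OF fin[OF that(1)] fin[OF that(2)]])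
  have finld: "finite (lin d y)" if "y \<subseteq> K" for y by (rule fin[OF dK[OF that]])
  let ?A = "{c\<in>Od m. lin d c = {}}" and ?B = "{c\<in>Wd m. lin f (lin d c) = {}}" and ?N = "lin d ` Od m'"
  have sA: "subsp ?A"
    unfolding subsp_def
  proof (intro conjI ballI)
    show "{} \<in> ?A" using o6[of m] by (simp add: subsp_def)
    fix y z assume y: "y \<in> ?A" and z: "z \<in> ?A"
    have "cadd y z \<in> Od m" using o6[of m] y z by (simp add: subsp_def)
    moreover have "lin d (cadd y z) = {}"
    proof -
      have "y \<in> Od m" "z \<in> Od m" "lin d y = {}" "lin d z = {}" using y z by auto
      thus ?thesis using ladd[OF OK[of y m] OK[of z m]] by simp
    qed
    ultimately show "cadd y z \<in> ?A" by simp
  qed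
  have WK: "w \<subseteq> K" if "w \<in> Wd k" for w k using that R.CK by (auto simp: Wd_def)
  have fadd: "lin f (lin d (cadd y z)) = cadd (lin f (lin d y)) (lin f (lin d z))" if "y \<subseteq> K" "z \<subseteq> K" for y z
    using ladd[OF that] lin_add[OF finld[OF that(1)] finld[OF that(2)]] by simp
  have sB: "subsp ?B"
    unfolding subsp_def
  proof (intro conjI ballI)
    show "{} \<in> ?B" by (simp add: Wd_def)
    fix y z assume y: "y \<in> ?B" and z: "z \<in> ?B"
    thus "cadd y z \<in> ?B" using fadd[OF WK WK] by (auto simp: Wd_def cadd_def)
  qed
  have sN: "subsp ?N"
    unfolding subsp_def
  proof (intro conjI ballI)
    show "{} \<in> ?N" using o6[of m'] by (auto simp: subsp_def intro!: image_eqI[of _ _ "{}"])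
    fix a b assume "a \<in> ?N" "b \<in> ?N"
    then obtain y z where yz: "y \<in> Od m'" "z \<in> Od m'" "a = lin d y" "b = lin d z" by blast
    hence "cadd a b = lin d (cadd y z)" using ladd OK by simp
    moreover have "cadd y z \<in> Od m'" using o6[of m'] yz by (simp add: subsp_def)
    ultimately show "cadd a b \<in> ?N" by blast
  qed
  have NA: "?N \<subseteq> ?A" using o4 o5 OK by auto
  have phiA: "y \<inter> C \<in> ?B" if "y \<in> ?A" for y
  proof -
    have y: "y \<in> Od m" "lin d y = {}" using that by auto
    have "lin f (lin d (y \<inter> C)) = lin f (lin d (lin f y))" using o1[OF y(1)] by simp
    also have "\<dots> = lin f (lin d y)" by (rule R.chain_set[OF f OK[OF y(1)]])
    finally have "lin f (lin d (y \<inter> C)) = {}" using y by simp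
    moreover have "y \<inter> C \<in> Wd m" using y(1) by (auto simp: Ochar Wd_def)
    ultimately show ?thesis by simp
  qed
  have phiB: "lin E w \<in> ?A" if "w \<in> ?B" for w
  proof -
    have w: "w \<in> Wd m" "lin f (lin d w) = {}" using that by auto
    define y where "y = lin E w"
    have y: "y \<in> Od m" "y \<inter> C = w" using o3[OF w(1)] by (auto simp: y_def)
    have yK: "y \<subseteq> K" using OK[OF y(1)] .
    have ySC: "y \<in> SC" using y(1) by (simp add: Ochar)
    have dySC: "lin d y \<in> SC" using Co.S_cd[OF yK] ySC by (simp add: SC_def)
    have "lin d y \<inter> C = lin f (lin d y)"
      using R.proj[OF f dK[OF yK]] dySC by (simp add: SC_def Co.S_def)
    also have "\<dots> = lin f (lin d (lin f y))" by (rule R.chain_set[OF f yK, symmetric])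
    also have "\<dots> = {}" using o1[OF y(1)] y(2) w(2) by simp
    finally have "lin d y = lin E {}"
      using Co.S_repr[OF g dK[OF yK] dySC[unfolded SC_def]] by (simp add: Eext)
    hence "lin d y = {}" by simp
    thus ?thesis using y(1) by (simp add: y_def)
  qed
  have bij: "bij_betw (\<lambda>y. y \<inter> C) ?A ?B"
  proof (rule bij_betwI[where g = "lin E"])
    show "(\<lambda>y. y \<inter> C) \<in> ?A \<rightarrow> ?B" using phiA by blast
    show "lin E \<in> ?B \<rightarrow> ?A" using phiB by blast
    show "lin E (x \<inter> C) = x" if "x \<in> ?A" for x using o2 that by blast
    show "lin E y \<inter> C = y" if "y \<in> ?B" for y using o3 that by blast
  qed
  have add: "\<forall>x\<in>?A. \<forall>y\<in>?A. cadd x y \<inter> C = cadd (x \<inter> C) (y \<inter> C)" by (auto simp: cadd_def)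
  have img: "(\<lambda>y. y \<inter> C) ` ?N = (\<lambda>c. lin f (lin d c)) ` Wd m'"
  proof (rule Set.set_eqI, rule iffI)
    fix a assume "a \<in> (\<lambda>y. y \<inter> C) ` ?N"
    then obtain y where y: "y \<in> Od m'" "a = lin d y \<inter> C" by blast
    have "a = lin f (lin d y)" using o1[OF o4[OF y(1)]] y by simp
    also have "\<dots> = lin f (lin d (lin f y))" by (rule R.chain_set[OF f OK[OF y(1)], symmetric])
    also have "\<dots> = lin f (lin d (y \<inter> C))" using o1[OF y(1)] by simp
    finally show "a \<in> (\<lambda>c. lin f (lin d c)) ` Wd m'"
      using y(1) by (auto simp: Ochar Wd_def)
  next
    fix a assume "a \<in> (\<lambda>c. lin f (lin d c)) ` Wd m'"
    then obtain w where w: "w \<in> Wd m'" "a = lin f (lin d w)" by blast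
    define y where "y = lin E w"
    have y: "y \<in> Od m'" "y \<inter> C = w" using o3[OF w(1)] by (auto simp: y_def)
    have "a = lin f (lin d (lin f y))" using w o1[OF y(1)] y(2) by simp
    also have "\<dots> = lin f (lin d y)" by (rule R.chain_set[OF f OK[OF y(1)]])
    also have "\<dots> = lin d y \<inter> C" using o1[OF o4[OF y(1)]] by simp
    finally show "a \<in> (\<lambda>y. y \<inter> C) ` ?N" using y(1) by blast
  qed
  show ?thesis using quot_iso[OF sA sB sN NA bij add] img by simp
qed

lemma card_2_mid:
  assumes lo: "finite lo" and sub: "lo \<subseteq> hi" and c: "card hi = Suc (Suc (card lo))"
  shows "card {r. lo \<subset> r \<and> r \<subset> hi \<and> card r = Suc (card lo)} = 2"
proof -
  have finhi: "finite hi" using c card.infinite by fastforce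
  have "card (hi - lo) = 2" using c sub lo by (simp add: card_Diff_subset)
  then obtain a b where ab: "hi - lo = {a, b}" "a \<noteq> b" by (auto simp: card_2_iff)
  have "{r. lo \<subset> r \<and> r \<subset> hi \<and> card r = Suc (card lo)} = {insert a lo, insert b lo}"
  proof (rule Set.set_eqI, rule iffI)
    fix r assume r: "r \<in> {r. lo \<subset> r \<and> r \<subset> hi \<and> card r = Suc (card lo)}"
    hence finr: "finite r" using finhi finite_subset by auto
    have "lo \<subseteq> r" using r by auto
    hence "card (r - lo) = card r - card lo" using card_Diff_subset[OF lo] by blast
    hence "card (r - lo) = 1" using r by simp
    then obtain x where x: "r - lo = {x}" by (auto simp: card_1_singleton_iff)
    have "r = insert x lo" using x r by blast
    moreover have "x \<in> {a, b}" using x r ab by blast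
    ultimately show "r \<in> {insert a lo, insert b lo}" by blast
  next
    fix r assume "r \<in> {insert a lo, insert b lo}"
    thus "r \<in> {r. lo \<subset> r \<and> r \<subset> hi \<and> card r = Suc (card lo)}"
      using ab lo sub by (auto simp: card_insert_if)
  qed
  moreover have "insert a lo \<noteq> insert b lo" using ab by blast
  ultimately show ?thesis by simp
qed

locale morse_ctx =
  fixes K :: "'v set set" and Ks :: "'v set set list"
  assumes sc: "simplicial_complex K" and ms: "morse_seq K Ks"
begin

abbreviation "n \<equiv> length Ks"
abbreviation "C \<equiv> critical Ks"
abbreviation "Up \<equiv> upper_regular Ks"
abbreviation "Low \<equiv> lower_regular Ks"

lemma finK: "finite K" using sc by (simp add: simplicial_complex_def)
lemma K_ne: "x \<in> K \<Longrightarrow> x \<noteq> {} \<and> finite x" using sc by (simp add: simplicial_complex_def)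
lemma K_closed: "x \<in> K \<Longrightarrow> y \<noteq> {} \<Longrightarrow> y \<subseteq> x \<Longrightarrow> y \<in> K"
  using sc unfolding simplicial_complex_def by blast

lemma n_pos: "0 < n" using ms by (simp add: morse_seq_def)
lemma K0: "Ks ! 0 = {}" using ms by (auto simp: morse_seq_def hd_conv_nth)
lemma Klast: "Ks ! (n - 1) = K" using ms by (auto simp: morse_seq_def last_conv_nth)

lemma step: "Suc i < n \<Longrightarrow> (\<exists>\<sigma> \<tau>. elem_expansion (Ks!i) (Ks!Suc i) \<sigma> \<tau>) \<or> (\<exists>\<nu>. elem_filling (Ks!i) (Ks!Suc i) \<nu>)"
  using ms by (simp add: morse_seq_def)

lemma step_sub: "Suc i < n \<Longrightarrow> Ks!i \<subseteq> Ks!Suc i"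
  using step[of i] by (auto simp: elem_expansion_def elem_filling_def)

lemma step_sc: "Suc i < n \<Longrightarrow> simplicial_complex (Ks!Suc i)"
  using step[of i] by (auto simp: elem_expansion_def elem_filling_def)

lemma mono: "i \<le> j \<Longrightarrow> j < n \<Longrightarrow> Ks!i \<subseteq> Ks!j"
proof (induction j)
  case 0 thus ?case by simp
next
  case (Suc j)
  show ?case
  proof (cases "i = Suc j")
    case True thus ?thesis by simp
  next
    case False
    hence "Ks!i \<subseteq> Ks!j" using Suc by simp
    thus ?thesis using step_sub[of j] Suc by blast
  qed
qed

lemma sub_K: "i < n \<Longrightarrow> Ks!i \<subseteq> K"
  using mono[of i "n - 1"] Klast by simp

definition new :: "'v set \<Rightarrow> nat \<Rightarrow> bool" where
  "new v i \<longleftrightarrow> Suc i < n \<and> v \<in> Ks!Suc i \<and> v \<notin> Ks!i"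

lemma new_unique: "new v i \<Longrightarrow> new v j \<Longrightarrow> i = j"
proof (rule ccontr)
  assume a: "new v i" "new v j" "i \<noteq> j"
  show False
  proof (cases "i < j")
    case True
    hence "Ks!Suc i \<subseteq> Ks!j" using mono[of "Suc i" j] a by (simp add: new_def)
    thus False using a by (auto simp: new_def)
  next
    case False
    hence "Ks!Suc j \<subseteq> Ks!i" using mono[of "Suc j" i] a by (simp add: new_def)
    thus False using a by (auto simp: new_def)
  qed
qed

lemma new_ex: "v \<in> K \<Longrightarrow> \<exists>i. new v i"
proof -
  assume v: "v \<in> K"
  define j where "j = (LEAST j. v \<in> Ks!j)"
  have ex: "v \<in> Ks!(n - 1)" using v Klast by simp
  have vj: "v \<in> Ks!j" unfolding j_def by (rule LeastI[of _ "n - 1"]) (rule ex)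
  have jle: "j \<le> n - 1" unfolding j_def by (rule Least_le) (rule ex)
  have "j \<noteq> 0" using vj K0 by (cases j) auto
  then obtain i where i: "j = Suc i" by (cases j) auto
  have "v \<notin> Ks!i" using not_less_Least[of i "\<lambda>j. v \<in> Ks!j"] i by (simp add: j_def)
  moreover have "Suc i < n" using jle i n_pos by simp
  ultimately show ?thesis using vj i by (auto simp: new_def)
qed

definition tm :: "'v set \<Rightarrow> nat" where "tm v = (THE i. new v i)"

lemma tm_eq: assumes "new v i" shows "tm v = i"
  unfolding tm_def
proof (rule the_equality)
  show "new v i" by (rule assms)
  fix x assume "new v x" thus "x = i" using new_unique assms by blast
qed

lemma new_tm: assumes "v \<in> K" shows "new v (tm v)"
proof -
  obtain i where "new v i" using new_ex[OF assms] by blast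
  thus ?thesis using tm_eq by simp
qed

lemma tm_less: "v \<in> K \<Longrightarrow> v \<in> Ks!i \<Longrightarrow> i < n \<Longrightarrow> tm v < i"
proof (rule ccontr)
  assume a: "v \<in> K" "v \<in> Ks!i" "i < n" "\<not> tm v < i"
  have "new v (tm v)" using new_tm a by blast
  hence "Ks!i \<subseteq> Ks!tm v" using mono[of i "tm v"] a by (auto simp: new_def)
  thus False using a \<open>new v (tm v)\<close> by (auto simp: new_def)
qed

lemma tm_greater: "v \<in> K \<Longrightarrow> v \<notin> Ks!Suc i \<Longrightarrow> Suc i < n \<Longrightarrow> i < tm v"
proof (rule ccontr)
  assume a: "v \<in> K" "v \<notin> Ks!Suc i" "Suc i < n" "\<not> i < tm v"
  have "new v (tm v)" using new_tm a by blast
  hence "Ks!Suc (tm v) \<subseteq> Ks!Suc i" using mono[of "Suc (tm v)" "Suc i"] a by (auto simp: new_def)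
  thus False using a \<open>new v (tm v)\<close> by (auto simp: new_def)
qed

lemma tm_lt_n: assumes "v \<in> K" shows "tm v < n"
  using new_tm[OF assms] by (simp add: new_def)

lemma exp_D:
  assumes "elem_expansion L K' \<sigma> \<tau>"
  shows "\<sigma> \<in> K'" "\<tau> \<in> K'" "\<sigma> \<subset> \<tau>" "\<sigma> \<notin> L" "\<tau> \<notin> L" "L = K' - {\<sigma>, \<tau>}"
    "simplicial_complex K'" "\<And>r. r \<in> K' \<Longrightarrow> \<sigma> \<subseteq> r \<Longrightarrow> r = \<sigma> \<or> r = \<tau>"
  using assms by (auto simp: elem_expansion_def free_pair_def)

lemma fill_D:
  assumes "elem_filling L K' \<nu>"
  shows "\<nu> \<in> K'" "\<nu> \<notin> L" "L = K' - {\<nu>}"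
  using assms by (auto simp: elem_filling_def facet_def)

lemma exp_new:
  assumes "Suc i < n" "elem_expansion (Ks!i) (Ks!Suc i) \<sigma> \<tau>"
  shows "new \<sigma> i" "new \<tau> i"
  unfolding new_def
  by (intro conjI assms(1) exp_D(1,2,4,5)[OF assms(2)])+

lemma fill_new:
  assumes "Suc i < n" "elem_filling (Ks!i) (Ks!Suc i) \<nu>"
  shows "new \<nu> i"
  unfolding new_def
  by (intro conjI assms(1) fill_D(1,2)[OF assms(2)])

lemma not_exp_fill:
  assumes "elem_expansion L K' \<sigma> \<tau>" "elem_filling L K' \<nu>" shows False
proof -
  have "\<sigma> \<in> K' - L" "\<tau> \<in> K' - L" using exp_D[OF assms(1)] by auto
  moreover have "K' - L = {\<nu>}" using fill_D[OF assms(2)] by auto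
  ultimately have "\<sigma> = \<tau>" by simp
  thus False using exp_D(3)[OF assms(1)] by simp
qed

lemma exp_exp:
  assumes "elem_expansion L K' \<sigma> \<tau>" "elem_expansion L K' \<sigma>' \<tau>'"
  shows "\<sigma> = \<sigma>' \<and> \<tau> = \<tau>'"
proof -
  have e1: "K' - L = {\<sigma>, \<tau>}" using exp_D[OF assms(1)] by auto
  have e2: "K' - L = {\<sigma>', \<tau>'}" using exp_D[OF assms(2)] by auto
  have p: "\<sigma> \<subset> \<tau>" "\<sigma>' \<subset> \<tau>'" using exp_D(3) assms by blast+
  have m: "\<sigma> \<in> {\<sigma>', \<tau>'}" "\<tau> \<in> {\<sigma>', \<tau>'}" "\<sigma>' \<in> {\<sigma>, \<tau>}"
    using e1 e2 by (metis insertI1 insertI2 singletonI)+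
  show ?thesis
  proof (cases "\<sigma> = \<sigma>'")
    case True
    thus ?thesis using m(2) p by auto
  next
    case False
    hence "\<sigma> = \<tau>'" "\<sigma>' = \<tau>" using m by auto
    thus ?thesis using p by auto
  qed
qed

lemma C_K: "C \<subseteq> K"
proof
  fix v assume "v \<in> C"
  then obtain i where i: "Suc i < n" "elem_filling (Ks!i) (Ks!Suc i) v" by (auto simp: critical_def)
  thus "v \<in> K" using fill_D(1)[OF i(2)] sub_K[OF i(1)] by blast
qed
lemma Up_K: "Up \<subseteq> K"
proof
  fix v assume "v \<in> Up"
  then obtain i s where i: "Suc i < n" "elem_expansion (Ks!i) (Ks!Suc i) s v" by (auto simp: upper_regular_def)
  thus "v \<in> K" using exp_D(2)[OF i(2)] sub_K[OF i(1)] by blast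
qed
lemma Low_K: "Low \<subseteq> K"
proof
  fix v assume "v \<in> Low"
  then obtain i s where i: "Suc i < n" "elem_expansion (Ks!i) (Ks!Suc i) v s" by (auto simp: lower_regular_def)
  thus "v \<in> K" using exp_D(1)[OF i(2)] sub_K[OF i(1)] by blast
qed

lemma partition: "K = C \<union> Up \<union> Low"
proof
  show "K \<subseteq> C \<union> Up \<union> Low"
  proof
    fix v assume v: "v \<in> K"
    obtain i where i: "new v i" using new_ex[OF v] by blast
    hence si: "Suc i < n" "v \<in> Ks!Suc i" "v \<notin> Ks!i" by (auto simp: new_def)
    from step[OF si(1)] show "v \<in> C \<union> Up \<union> Low"
    proof
      assume "\<exists>\<sigma> \<tau>. elem_expansion (Ks!i) (Ks!Suc i) \<sigma> \<tau>"
      then obtain \<sigma> \<tau> where e: "elem_expansion (Ks!i) (Ks!Suc i) \<sigma> \<tau>" by blast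
      hence "v = \<sigma> \<or> v = \<tau>" using exp_D(6)[OF e] si by blast
      thus ?thesis using e si(1) by (auto simp: upper_regular_def lower_regular_def)
    next
      assume "\<exists>\<nu>. elem_filling (Ks!i) (Ks!Suc i) \<nu>"
      then obtain \<nu> where e: "elem_filling (Ks!i) (Ks!Suc i) \<nu>" by blast
      hence "v = \<nu>" using fill_D(3)[OF e] si by blast
      thus ?thesis using e si(1) by (auto simp: critical_def)
    qed
  qed
  show "C \<union> Up \<union> Low \<subseteq> K" using C_K Up_K Low_K by blast
qed

lemma C_Up: "C \<inter> Up = {}"
proof (rule ccontr)
  assume "C \<inter> Up \<noteq> {}"
  then obtain v i j \<nu> \<sigma> where a: "Suc i < n" "elem_filling (Ks!i) (Ks!Suc i) v"
    "Suc j < n" "elem_expansion (Ks!j) (Ks!Suc j) \<sigma> v"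
    by (auto simp: critical_def upper_regular_def)
  have "i = j" using fill_new[OF a(1,2)] exp_new(2)[OF a(3,4)] new_unique by blast
  thus False using not_exp_fill a by blast
qed

lemma C_Low: "C \<inter> Low = {}"
proof (rule ccontr)
  assume "C \<inter> Low \<noteq> {}"
  then obtain v i j \<tau> where a: "Suc i < n" "elem_filling (Ks!i) (Ks!Suc i) v"
    "Suc j < n" "elem_expansion (Ks!j) (Ks!Suc j) v \<tau>"
    by (auto simp: critical_def lower_regular_def)
  have "i = j" using fill_new[OF a(1,2)] exp_new(1)[OF a(3,4)] new_unique by blast
  thus False using not_exp_fill a by blast
qed

lemma Up_Low: "Up \<inter> Low = {}"
proof (rule ccontr)
  assume "Up \<inter> Low \<noteq> {}"
  then obtain v i j \<tau> \<sigma> where a: "Suc i < n" "elem_expansion (Ks!i) (Ks!Suc i) \<sigma> v"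
    "Suc j < n" "elem_expansion (Ks!j) (Ks!Suc j) v \<tau>"
    by (auto simp: upper_regular_def lower_regular_def)
  have "i = j" using exp_new(2)[OF a(1,2)] exp_new(1)[OF a(3,4)] new_unique by blast
  hence "\<sigma> = v" using exp_exp a by blast
  thus False using exp_D(3)[OF a(2)] by blast
qed

definition mt1 :: "'v set \<Rightarrow> 'v set" where
  "mt1 \<tau> = (THE \<sigma>. \<exists>i. Suc i < n \<and> elem_expansion (Ks!i) (Ks!Suc i) \<sigma> \<tau>)"
definition mt2 :: "'v set \<Rightarrow> 'v set" where
  "mt2 \<sigma> = (THE \<tau>. \<exists>i. Suc i < n \<and> elem_expansion (Ks!i) (Ks!Suc i) \<sigma> \<tau>)"

lemma pair_unique:
  assumes "Suc i < n" "elem_expansion (Ks!i) (Ks!Suc i) \<sigma> \<tau>"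
    "Suc j < n" "elem_expansion (Ks!j) (Ks!Suc j) \<sigma>' \<tau>'"
    "\<sigma> = \<sigma>' \<or> \<tau> = \<tau>'"
  shows "i = j \<and> \<sigma> = \<sigma>' \<and> \<tau> = \<tau>'"
proof -
  have "i = j" using assms exp_new new_unique by metis
  thus ?thesis using exp_exp assms by blast
qed

lemma mt1_prop:
  assumes "Suc i < n" "elem_expansion (Ks!i) (Ks!Suc i) \<sigma> \<tau>"
  shows "mt1 \<tau> = \<sigma>"
  unfolding mt1_def
proof (rule the_equality)
  show "\<exists>i. Suc i < n \<and> elem_expansion (Ks!i) (Ks!Suc i) \<sigma> \<tau>" using assms by blast
  fix \<sigma>' assume "\<exists>i. Suc i < n \<and> elem_expansion (Ks!i) (Ks!Suc i) \<sigma>' \<tau>"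
  thus "\<sigma>' = \<sigma>" using pair_unique[OF assms] by blast
qed

lemma mt2_prop:
  assumes "Suc i < n" "elem_expansion (Ks!i) (Ks!Suc i) \<sigma> \<tau>"
  shows "mt2 \<sigma> = \<tau>"
  unfolding mt2_def
proof (rule the_equality)
  show "\<exists>i. Suc i < n \<and> elem_expansion (Ks!i) (Ks!Suc i) \<sigma> \<tau>" using assms by blast
  fix \<tau>' assume "\<exists>i. Suc i < n \<and> elem_expansion (Ks!i) (Ks!Suc i) \<sigma> \<tau>'"
  thus "\<tau>' = \<tau>" using pair_unique[OF assms] by blast
qed

lemma free_card:
  assumes "elem_expansion L K' \<sigma> \<tau>" shows "card \<tau> = Suc (card \<sigma>)"
proof -
  note e = exp_D[OF assms]
  obtain a where a: "a \<in> \<tau>" "a \<notin> \<sigma>" using psubset_imp_ex_mem[OF e(3)] by blast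
  have cl: "\<forall>s\<in>K'. \<forall>t. t \<noteq> {} \<and> t \<subseteq> s \<longrightarrow> t \<in> K'" using e(7) unfolding simplicial_complex_def by blast
  have "insert a \<sigma> \<subseteq> \<tau>" using e(3) a by blast
  moreover have "insert a \<sigma> \<noteq> {}" by simp
  ultimately have "insert a \<sigma> \<in> K'" using bspec[OF cl e(2)] by simp
  hence "insert a \<sigma> = \<sigma> \<or> insert a \<sigma> = \<tau>" using e(8)[OF _ subset_insertI] by blast
  hence "insert a \<sigma> = \<tau>" using a(2) by (metis insertI1)
  moreover have "finite \<sigma>" using e(1,7) unfolding simplicial_complex_def by blast
  ultimately show ?thesis using a by (metis card_insert_disjoint)
qed

lemma dd_bd: "x \<in> K \<Longrightarrow> lin (bd K) (bd K x) = {}"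
proof (rule Set.equals0I)
  fix v assume x: "x \<in> K" and v: "v \<in> lin (bd K) (bd K x)"
  define Q where "Q = {r\<in>bd K x. v \<in> bd K r}"
  have oQ: "odd (card Q)" using v by (simp add: lin_mem Q_def)
  hence "Q \<noteq> {}" by (metis card.empty even_zero)
  then obtain r0 where r0: "r0 \<in> Q" by blast
  have vK: "v \<in> K" and vx: "v \<subseteq> x" and cv: "card x = Suc (Suc (card v))"
    using r0 by (auto simp: Q_def bd_def)
  have finv: "finite v" using K_ne[OF vK] by blast
  have "Q = {r. v \<subset> r \<and> r \<subset> x \<and> card r = Suc (card v)}"
  proof (rule Set.set_eqI, rule iffI)
    fix r assume "r \<in> Q" thus "r \<in> {r. v \<subset> r \<and> r \<subset> x \<and> card r = Suc (card v)}"
      by (auto simp: Q_def bd_def)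
  next
    fix r assume r: "r \<in> {r. v \<subset> r \<and> r \<subset> x \<and> card r = Suc (card v)}"
    hence "r \<in> K" using K_closed[OF x, of r] K_ne[OF vK] by auto
    thus "r \<in> Q" using r vK cv by (auto simp: Q_def bd_def)
  qed
  hence "card Q = 2" using card_2_mid[OF finv vx cv] by simp
  thus False using oQ by simp
qed

lemma dd_cbd: "x \<in> K \<Longrightarrow> lin (cbd K) (cbd K x) = {}"
proof (rule Set.equals0I)
  fix v assume x: "x \<in> K" and v: "v \<in> lin (cbd K) (cbd K x)"
  define Q where "Q = {r\<in>cbd K x. v \<in> cbd K r}"
  have oQ: "odd (card Q)" using v by (simp add: lin_mem Q_def)
  hence "Q \<noteq> {}" by (metis card.empty even_zero)
  then obtain r0 where r0: "r0 \<in> Q" by blast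
  have vK: "v \<in> K" and xv: "x \<subseteq> v" and cv: "card v = Suc (Suc (card x))"
    using r0 by (auto simp: Q_def cbd_def)
  have finx: "finite x" using K_ne[OF x] by blast
  have "Q = {r. x \<subset> r \<and> r \<subset> v \<and> card r = Suc (card x)}"
  proof (rule Set.set_eqI, rule iffI)
    fix r assume "r \<in> Q" thus "r \<in> {r. x \<subset> r \<and> r \<subset> v \<and> card r = Suc (card x)}"
      by (auto simp: Q_def cbd_def)
  next
    fix r assume r: "r \<in> {r. x \<subset> r \<and> r \<subset> v \<and> card r = Suc (card x)}"
    hence "r \<in> K" using K_closed[OF vK, of r] K_ne[OF x] by auto
    thus "r \<in> Q" using r vK cv by (auto simp: Q_def cbd_def)
  qed
  hence "card Q = 2" using card_2_mid[OF finx xv cv] by simp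
  thus False using oQ by simp
qed

end

context morse_ctx
begin

lemma bd_sub: "bd K x \<subseteq> K" unfolding bd_def by (rule Collect_restrict)
lemma cbd_sub: "cbd K x \<subseteq> K" unfolding cbd_def by (rule Collect_restrict)

lemma up_pair: "h \<in> Up \<Longrightarrow> \<exists>i. Suc i < n \<and> elem_expansion (Ks!i) (Ks!Suc i) (mt1 h) h"
proof -
  assume "h \<in> Up"
  then obtain i s where i: "Suc i < n" "elem_expansion (Ks!i) (Ks!Suc i) s h"
    by (auto simp: upper_regular_def)
  thus ?thesis using mt1_prop[OF i] by blast
qed

lemma low_pair: "s \<in> Low \<Longrightarrow> \<exists>i. Suc i < n \<and> elem_expansion (Ks!i) (Ks!Suc i) s (mt2 s)"
proof -
  assume "s \<in> Low"
  then obtain i h where i: "Suc i < n" "elem_expansion (Ks!i) (Ks!Suc i) s h"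
    by (auto simp: lower_regular_def)
  thus ?thesis using mt2_prop[OF i] by blast
qed

lemma mstruct_R: "mstruct K (bd K) (cbd K) C Up Low mt1 tm card"
proof
  show "finite K" by (rule finK)
  show "\<And>x. x \<in> K \<Longrightarrow> bd K x \<subseteq> K" by (rule bd_sub)
  show "\<And>x. x \<in> K \<Longrightarrow> cbd K x \<subseteq> K" by (rule cbd_sub)
  show "\<And>x y. x \<in> K \<Longrightarrow> y \<in> K \<Longrightarrow> y \<in> bd K x \<longleftrightarrow> x \<in> cbd K y" by (simp add: bd_def cbd_def)
  show "\<And>x. x \<in> K \<Longrightarrow> lin (bd K) (bd K x) = {}" by (rule dd_bd)
  show "K = C \<union> Up \<union> Low" by (rule partition)
  show "C \<inter> Up = {}" by (rule C_Up)
  show "C \<inter> Low = {}" by (rule C_Low)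
  show "Up \<inter> Low = {}" by (rule Up_Low)
  show "\<And>h. h \<in> Up \<Longrightarrow> mt1 h \<in> bd K h"
  proof -
    fix h assume "h \<in> Up"
    then obtain i where i: "Suc i < n" "elem_expansion (Ks!i) (Ks!Suc i) (mt1 h) h" using up_pair by blast
    have "mt1 h \<in> K" using exp_D(1)[OF i(2)] sub_K[OF i(1)] by blast
    thus "mt1 h \<in> bd K h" using exp_D(3)[OF i(2)] free_card[OF i(2)] by (simp add: bd_def)
  qed
  show "\<And>h. h \<in> Up \<Longrightarrow> mt1 h \<in> Low"
  proof -
    fix h assume "h \<in> Up"
    then obtain i where i: "Suc i < n" "elem_expansion (Ks!i) (Ks!Suc i) (mt1 h) h" using up_pair by blast
    show "mt1 h \<in> Low" unfolding lower_regular_def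
      by (rule CollectI, rule exI[of _ i], rule exI[of _ h]) (use i in simp)
  qed
  show "\<And>t. t \<in> Low \<Longrightarrow> \<exists>h\<in>Up. mt1 h = t"
  proof -
    fix t assume "t \<in> Low"
    then obtain i h where i: "Suc i < n" "elem_expansion (Ks!i) (Ks!Suc i) t h"
      by (auto simp: lower_regular_def)
    have "h \<in> Up" using i by (auto simp: upper_regular_def)
    thus "\<exists>h\<in>Up. mt1 h = t" using mt1_prop[OF i] by blast
  qed
  show "inj_on mt1 Up"
  proof (rule inj_onI)
    fix h1 h2 assume h: "h1 \<in> Up" "h2 \<in> Up" "mt1 h1 = mt1 h2"
    obtain i where i: "Suc i < n" "elem_expansion (Ks!i) (Ks!Suc i) (mt1 h1) h1" using up_pair h(1) by blast
    obtain j where j: "Suc j < n" "elem_expansion (Ks!j) (Ks!Suc j) (mt1 h2) h2" using up_pair h(2) by blast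
    show "h1 = h2" using pair_unique[OF i j] h(3) by blast
  qed
  show "\<And>h. h \<in> Up \<Longrightarrow> tm (mt1 h) = tm h"
  proof -
    fix h assume "h \<in> Up"
    then obtain i where i: "Suc i < n" "elem_expansion (Ks!i) (Ks!Suc i) (mt1 h) h" using up_pair by blast
    show "tm (mt1 h) = tm h" using tm_eq[OF exp_new(1)[OF i]] tm_eq[OF exp_new(2)[OF i]] by simp
  qed
  show "\<And>h y. h \<in> Up \<Longrightarrow> y \<in> bd K h \<Longrightarrow> y \<noteq> mt1 h \<Longrightarrow> tm y < tm h"
  proof -
    fix h y assume h: "h \<in> Up" and y: "y \<in> bd K h" "y \<noteq> mt1 h"
    obtain i where i: "Suc i < n" "elem_expansion (Ks!i) (Ks!Suc i) (mt1 h) h" using up_pair h by blast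
    have yK: "y \<in> K" and yh: "y \<subset> h" using y by (auto simp: bd_def)
    have "y \<noteq> {}" using K_ne[OF yK] by blast
    moreover have "h \<in> Ks!Suc i" by (rule exp_D(2)[OF i(2)])
    ultimately have "y \<in> Ks!Suc i" using step_sc[OF i(1)] yh unfolding simplicial_complex_def
      by (meson psubset_imp_subset)
    moreover have "y \<noteq> h" using yh by simp
    ultimately have "y \<in> Ks!i" using y(2) exp_D(6)[OF i(2)] by simp
    hence "tm y < i" using tm_less[OF yK] i(1) by simp
    thus "tm y < tm h" using tm_eq[OF exp_new(2)[OF i]] by simp
  qed
  show "\<And>x y z. x \<in> K \<Longrightarrow> y \<in> bd K x \<Longrightarrow> z \<in> bd K x \<Longrightarrow> card y = card z"
    by (simp add: bd_def)
qed

lemma mstruct_C: "mstruct K (cbd K) (bd K) C Low Up mt2 (\<lambda>v. n - tm v) card"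
proof
  show "finite K" by (rule finK)
  show "\<And>x. x \<in> K \<Longrightarrow> cbd K x \<subseteq> K" by (rule cbd_sub)
  show "\<And>x. x \<in> K \<Longrightarrow> bd K x \<subseteq> K" by (rule bd_sub)
  show "\<And>x y. x \<in> K \<Longrightarrow> y \<in> K \<Longrightarrow> y \<in> cbd K x \<longleftrightarrow> x \<in> bd K y" by (simp add: bd_def cbd_def)
  show "\<And>x. x \<in> K \<Longrightarrow> lin (cbd K) (cbd K x) = {}" by (rule dd_cbd)
  show "K = C \<union> Low \<union> Up" using partition by (simp add: Un_ac)
  show "C \<inter> Low = {}" by (rule C_Low)
  show "C \<inter> Up = {}" by (rule C_Up)
  show "Low \<inter> Up = {}" using Up_Low by (simp add: Int_commute)
  show "\<And>h. h \<in> Low \<Longrightarrow> mt2 h \<in> cbd K h"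
  proof -
    fix h assume "h \<in> Low"
    then obtain i where i: "Suc i < n" "elem_expansion (Ks!i) (Ks!Suc i) h (mt2 h)" using low_pair by blast
    have "mt2 h \<in> K" using exp_D(2)[OF i(2)] sub_K[OF i(1)] by blast
    thus "mt2 h \<in> cbd K h" using exp_D(3)[OF i(2)] free_card[OF i(2)] by (simp add: cbd_def)
  qed
  show "\<And>h. h \<in> Low \<Longrightarrow> mt2 h \<in> Up"
  proof -
    fix h assume "h \<in> Low"
    then obtain i where i: "Suc i < n" "elem_expansion (Ks!i) (Ks!Suc i) h (mt2 h)" using low_pair by blast
    show "mt2 h \<in> Up" unfolding upper_regular_def
      by (rule CollectI, rule exI[of _ i], rule exI[of _ h]) (use i in simp)
  qed
  show "\<And>t. t \<in> Up \<Longrightarrow> \<exists>h\<in>Low. mt2 h = t"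
  proof -
    fix t assume "t \<in> Up"
    then obtain i h where i: "Suc i < n" "elem_expansion (Ks!i) (Ks!Suc i) h t"
      by (auto simp: upper_regular_def)
    have "h \<in> Low" using i by (auto simp: lower_regular_def)
    thus "\<exists>h\<in>Low. mt2 h = t" using mt2_prop[OF i] by blast
  qed
  show "inj_on mt2 Low"
  proof (rule inj_onI)
    fix h1 h2 assume h: "h1 \<in> Low" "h2 \<in> Low" "mt2 h1 = mt2 h2"
    obtain i where i: "Suc i < n" "elem_expansion (Ks!i) (Ks!Suc i) h1 (mt2 h1)" using low_pair h(1) by blast
    obtain j where j: "Suc j < n" "elem_expansion (Ks!j) (Ks!Suc j) h2 (mt2 h2)" using low_pair h(2) by blast
    show "h1 = h2" using pair_unique[OF i j] h(3) by blast
  qed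
  show "\<And>h. h \<in> Low \<Longrightarrow> n - tm (mt2 h) = n - tm h"
  proof -
    fix h assume "h \<in> Low"
    then obtain i where i: "Suc i < n" "elem_expansion (Ks!i) (Ks!Suc i) h (mt2 h)" using low_pair by blast
    show "n - tm (mt2 h) = n - tm h" using tm_eq[OF exp_new(1)[OF i]] tm_eq[OF exp_new(2)[OF i]] by simp
  qed
  show "\<And>h y. h \<in> Low \<Longrightarrow> y \<in> cbd K h \<Longrightarrow> y \<noteq> mt2 h \<Longrightarrow> n - tm y < n - tm h"
  proof -
    fix h y assume h: "h \<in> Low" and y: "y \<in> cbd K h" "y \<noteq> mt2 h"
    obtain i where i: "Suc i < n" "elem_expansion (Ks!i) (Ks!Suc i) h (mt2 h)" using low_pair h by blast
    have yK: "y \<in> K" and hy: "h \<subset> y" using y by (auto simp: cbd_def)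
    have "y \<notin> Ks!Suc i"
    proof
      assume "y \<in> Ks!Suc i"
      hence "y = h \<or> y = mt2 h" using exp_D(8)[OF i(2)] hy by (simp add: psubset_imp_subset)
      thus False using hy y(2) by auto
    qed
    hence "i < tm y" using tm_greater[OF yK] i(1) by simp
    moreover have "tm y < n" using tm_lt_n[OF yK] .
    moreover have "tm h = i" using tm_eq[OF exp_new(1)[OF i]] .
    ultimately show "n - tm y < n - tm h" by simp
  qed
  show "\<And>x y z. x \<in> K \<Longrightarrow> y \<in> cbd K x \<Longrightarrow> z \<in> cbd K x \<Longrightarrow> card y = card z"
    by (simp add: cbd_def)
qed

lemma ref_aref: "aref K (bd K) C Up card (reference K Ks)"
proof -
  have "is_reference K Ks = aref K (bd K) C Up card"
  proof (rule ext)
    fix f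
    show "is_reference K Ks f = aref K (bd K) C Up card f"
    proof
      assume a: "is_reference K Ks f"
      show "aref K (bd K) C Up card f"
        unfolding aref_def
      proof (intro conjI allI ballI impI)
        fix x assume "x \<in> K"
        have c0: "card x > 0" using K_ne[OF \<open>x \<in> K\<close>] by (simp add: card_gt_0_iff)
        hence "x \<in> simplices K (card x - 1)" using \<open>x \<in> K\<close> by (simp add: simplices_def)
        hence "f x \<in> crit_chains K Ks (card x - 1)" using a by (auto simp: is_reference_def)
        thus "f x \<subseteq> {c\<in>C. card c = card x}"
          using c0 by (auto simp: crit_chains_def simplices_def)
      qed (use a in \<open>auto simp: is_reference_def\<close>)
    next
      assume a: "aref K (bd K) C Up card f"
      show "is_reference K Ks f"
        unfolding is_reference_def
      proof (intro conjI allI ballI impI)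
        fix p x assume "x \<in> simplices K p"
        hence xK: "x \<in> K" and cx: "card x = Suc p" by (auto simp: simplices_def)
        have "f x \<subseteq> {c\<in>C. card c = card x}" using a xK by (simp add: aref_def)
        hence "f x \<subseteq> {c\<in>C. card c = Suc p}" using cx by simp
        thus "f x \<in> crit_chains K Ks p" using C_K by (auto simp: crit_chains_def simplices_def)
      qed (use a in \<open>auto simp: aref_def\<close>)
    qed
  qed
  thus ?thesis
    unfolding reference_def using mstruct.aref_the[OF mstruct_R] by simp
qed

lemma coref_aref: "aref K (cbd K) C Low card (coreference K Ks)"
proof -
  have "is_coreference K Ks = aref K (cbd K) C Low card"
  proof (rule ext)
    fix f
    show "is_coreference K Ks f = aref K (cbd K) C Low card f"
    proof
      assume a: "is_coreference K Ks f"
      show "aref K (cbd K) C Low card f"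
        unfolding aref_def
      proof (intro conjI allI ballI impI)
        fix x assume "x \<in> K"
        have c0: "card x > 0" using K_ne[OF \<open>x \<in> K\<close>] by (simp add: card_gt_0_iff)
        hence "x \<in> simplices K (card x - 1)" using \<open>x \<in> K\<close> by (simp add: simplices_def)
        hence "f x \<in> crit_chains K Ks (card x - 1)" using a by (auto simp: is_coreference_def)
        thus "f x \<subseteq> {c\<in>C. card c = card x}"
          using c0 by (auto simp: crit_chains_def simplices_def)
      qed (use a in \<open>auto simp: is_coreference_def\<close>)
    next
      assume a: "aref K (cbd K) C Low card f"
      show "is_coreference K Ks f"
        unfolding is_coreference_def
      proof (intro conjI allI ballI impI)
        fix p x assume "x \<in> simplices K p"
        hence xK: "x \<in> K" and cx: "card x = Suc p" by (auto simp: simplices_def)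
        have "f x \<subseteq> {c\<in>C. card c = card x}" using a xK by (simp add: aref_def)
        hence "f x \<subseteq> {c\<in>C. card c = Suc p}" using cx by simp
        thus "f x \<in> crit_chains K Ks p" using C_K by (auto simp: crit_chains_def simplices_def)
      qed (use a in \<open>auto simp: aref_def\<close>)
    qed
  qed
  thus ?thesis
    unfolding coreference_def using mstruct.aref_the[OF mstruct_C] by simp
qed

end

context morse_ctx
begin

lemma crit_eq: "crit_chains K Ks p = Pow {c\<in>C. card c = Suc p}"
  using C_K by (auto simp: crit_chains_def simplices_def)

lemma C_card0: "{c\<in>C. card c = 0} = {}"
  using C_K K_ne by (auto simp: card_eq_0_iff)

lemma ext_chains_eq: "ext_chains K Ks k = lin (\<lambda>\<kappa>. {\<nu>\<in>K. \<kappa> \<in> coreference K Ks \<nu>}) ` Pow {c\<in>C. card c = Suc k}"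
proof -
  have "ext_ref K Ks = (\<lambda>\<kappa>. {\<nu>\<in>K. \<kappa> \<in> coreference K Ks \<nu>})" by (rule ext) (simp add: ext_ref_def)
  thus ?thesis by (simp add: ext_chains_def crit_eq)
qed

lemma coext_chains_eq: "coext_chains K Ks k = lin (\<lambda>\<kappa>. {\<nu>\<in>K. \<kappa> \<in> reference K Ks \<nu>}) ` Pow {c\<in>C. card c = Suc k}"
proof -
  have "ext_coref K Ks = (\<lambda>\<kappa>. {\<nu>\<in>K. \<kappa> \<in> reference K Ks \<nu>})" by (rule ext) (simp add: ext_coref_def)
  thus ?thesis by (simp add: coext_chains_def crit_eq)
qed

lemma critbd_eq: "crit_bd K Ks = (\<lambda>c. lin (reference K Ks) (lin (bd K) c))"
  by (rule ext) (simp add: crit_bd_def)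

lemma critcbd_eq: "crit_cbd K Ks = (\<lambda>c. lin (coreference K Ks) (lin (cbd K) c))"
  by (rule ext) (simp add: crit_cbd_def)

lemma hom: "homology (ext_chains K Ks) (lin (bd K)) p \<cong> homology (crit_chains K Ks) (crit_bd K Ks) p"
proof -
  have dims: "\<forall>x\<in>K. card x = Suc (Suc p) \<longrightarrow> (\<forall>y\<in>bd K x. card y = Suc p)" by (auto simp: bd_def)
  note A = assembly[OF mstruct_R mstruct_C ref_aref coref_aref dims]
  show ?thesis unfolding homology_def ext_chains_eq crit_eq critbd_eq using A by simp
qed

lemma cohom: "cohomology (coext_chains K Ks) (lin (cbd K)) p \<cong> cohomology (crit_chains K Ks) (crit_cbd K Ks) p"
proof -
  have dims: "\<forall>x\<in>K. card x = p \<longrightarrow> (\<forall>y\<in>cbd K x. card y = Suc p)" by (auto simp: cbd_def)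
  note A = assembly[OF mstruct_C mstruct_R coref_aref ref_aref dims]
  define E where "E = (\<lambda>\<kappa>. {\<nu>\<in>K. \<kappa> \<in> reference K Ks \<nu>})"
  have L: "(if p = 0 then {{}} else lin (cbd K) ` coext_chains K Ks (p - 1)) = lin (cbd K) ` (lin E ` Pow {c\<in>C. card c = p})"
  proof (cases p)
    case 0 thus ?thesis by (simp add: C_card0)
  next
    case (Suc q) thus ?thesis by (simp add: coext_chains_eq E_def)
  qed
  have R: "(if p = 0 then {{}} else crit_cbd K Ks ` crit_chains K Ks (p - 1)) =
      (\<lambda>c. lin (coreference K Ks) (lin (cbd K) c)) ` Pow {c\<in>C. card c = p}"
  proof (cases p)
    case 0 thus ?thesis by (simp add: C_card0)
  next
    case (Suc q) thus ?thesis by (simp add: crit_eq critcbd_eq)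
  qed
  have "cohomology (coext_chains K Ks) (lin (cbd K)) p =
     chain_grp {c\<in>lin E ` Pow {c\<in>C. card c = Suc p}. lin (cbd K) c = {}} Mod (lin (cbd K) ` (lin E ` Pow {c\<in>C. card c = p}))"
    unfolding cohomology_def L by (simp add: coext_chains_eq E_def)
  moreover have "cohomology (crit_chains K Ks) (crit_cbd K Ks) p =
     chain_grp {c\<in>Pow {c\<in>C. card c = Suc p}. lin (coreference K Ks) (lin (cbd K) c) = {}} Mod
       ((\<lambda>c. lin (coreference K Ks) (lin (cbd K) c)) ` Pow {c\<in>C. card c = p})"
    unfolding cohomology_def R by (simp add: crit_eq critcbd_eq)
  ultimately show ?thesis using A by (simp add: E_def)
qed

end

theorem theorem11:
  fixes K :: "'v set set" and Ks :: "'v set set list"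
  assumes "simplicial_complex K" and "morse_seq K Ks"
  shows "\<forall>p. homology (ext_chains K Ks) (lin (bd K)) p \<cong> homology (crit_chains K Ks) (crit_bd K Ks) p
           \<and> cohomology (coext_chains K Ks) (lin (cbd K)) p \<cong> cohomology (crit_chains K Ks) (crit_cbd K Ks) p"
proof -
  interpret morse_ctx K Ks using assms by (rule morse_ctx.intro)
  show ?thesis using hom cohom by blast
qed

end
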